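(* Let $\mathcal{T} = \{T_1, \ldots, T_t\}$ be a set of unrooted binary phylogenetic trees on a common leaf set $X$, let $\mathcal{Q} = \bigcup_{i=2}^t \mathcal{Q}_i$, where $\mathcal{Q}_i$ is the set of incompatible quartets of $T_1$ and $T_i$, and consider the integer program $$\text{minimize } \sum_{e \in E(T_1)} x_e \quad \text{s.t. } \sum_{e \in L(Q)} x_e \ge 1 \ \ \forall Q \in \mathcal{Q}, \qquad x_e \in \{0,1\}\ \ \forall e \in E(T_1).$$ Identify a $0/1$ vector $x$ with the edge set $\{e \in E(T_1) : x_e = 1\}$. Then a subset $E \subseteq E(T_1)$ is a feasible solution of this integer program if and only if $\mathcal{F}_E$ is an agreement forest of $\mathcal{T}$.
   Context: A (binary) phylogenetic tree on a finite set $X$ is an unrooted tree whose internal vertices have degree 3 and whose leaves are bijectively labelled by $X$ (leaves are identified with their labels). Two phylogenetic trees on $X$ are isomorphic ($\cong$) if there is a graph isomorphism between them fixing every leaf label. For $Y \subseteq X$, $T[Y]$ is the minimal subtree of $T$ connecting the leaves in $Y$, and $T|_Y$ is obtained from $T[Y]$ by suppressing all degree-2 vertices (replacing a degree-2 vertex $v$ with neighbours $u,w$ by an edge $\{u,w\}$). An agreement forest of $\mathcal{T}=\{T_1,\dots,T_t\}$ is a partition $\{Y_1,\ldots,Y_k\}$ of $X$ such that (1) $T_i|_{Y_h} \cong T_j|_{Y_h}$ for all $i,j,h$, and (2) for every $i$ and all $h \ne h'$, the subtrees $T_i[Y_h]$ and $T_i[Y_{h'}]$ are vertex-disjoint. A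 quartet is a 4-element subset of $X$. For a quartet $Q=\{a,b,c,d\}$, $ab|cd$ denotes the tree on $Q$ in which $a,b$ share a neighbour $u$, $c,d$ share a neighbour $v$, and $u,v$ are adjacent. If $T_1|_Q \cong ab|cd$, then $L(Q)$ is the set of edges of $T_1[\{a,b\}] \cup T_1[\{c,d\}]$. A quartet $Q$ is an incompatible quartet of $T_i$ and $T_j$ if $T_i|_Q \not\cong T_j|_Q$. For $E \subseteq E(T_1)$, $\mathcal{F}_E$ is the partition of $X$ in which leaves $a,b$ lie in the same part iff the path $T_1[\{a,b\}]$ contains no edge of $E$. *)

theory Defs
  imports Main
begin

type_synonym 'v graph = "'v set \<times> 'v set set"

definition verts :: "'v graph \<Rightarrow> 'v set" where "verts G = fst G"
definition edges :: "'v graph \<Rightarrow> 'v set set" where "edges G = snd G"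

definition wf_graph :: "'v graph \<Rightarrow> bool" where
  "wf_graph G \<longleftrightarrow> finite (verts G) \<and>
     (\<forall>e\<in>edges G. \<exists>u v. u \<noteq> v \<and> u \<in> verts G \<and> v \<in> verts G \<and> e = {u, v})"

definition degree :: "'v graph \<Rightarrow> 'v \<Rightarrow> nat" where
  "degree G v = card {e \<in> edges G. v \<in> e}"

definition is_walk :: "'v graph \<Rightarrow> 'v list \<Rightarrow> bool" where
  "is_walk G p \<longleftrightarrow> p \<noteq> [] \<and> set p \<subseteq> verts G \<and>
     (\<forall>i. Suc i < length p \<longrightarrow> {p ! i, p ! Suc i} \<in> edges G)"

definition is_path :: "'v graph \<Rightarrow> 'v \<Rightarrow> 'v \<Rightarrow> 'v list \<Rightarrow> bool" where
  "is_path G u w p \<longleftrightarrow> is_walk G p \<and> distinct p \<and> hd p = u \<and> last p = w"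

definition list_edges :: "'v list \<Rightarrow> 'v set set" where
  "list_edges p = {{p ! i, p ! Suc i} | i. Suc i < length p}"

definition connected_graph :: "'v graph \<Rightarrow> bool" where
  "connected_graph G \<longleftrightarrow> (\<forall>u\<in>verts G. \<forall>w\<in>verts G. \<exists>p. is_path G u w p)"

definition acyclic_graph :: "'v graph \<Rightarrow> bool" where
  "acyclic_graph G \<longleftrightarrow> \<not> (\<exists>p. is_walk G p \<and> distinct p \<and> length p \<ge> 3 \<and>
                                {last p, hd p} \<in> edges G)"

definition is_tree :: "'v graph \<Rightarrow> bool" where
  "is_tree G \<longleftrightarrow> wf_graph G \<and> connected_graph G \<and> acyclic_graph G"

section \<open>Binary phylogenetic trees (leaves identified with their labels)\<close>

definition phylo_tree :: "'v set \<Rightarrow> 'v graph \<Rightarrow> bool" where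
  "phylo_tree X T \<longleftrightarrow> is_tree T \<and> X \<subseteq> verts T \<and>
     (\<forall>x\<in>X. degree T x \<le> 1) \<and> (\<forall>v\<in>verts T - X. degree T v = 3)"

definition iso_fixing :: "'v set \<Rightarrow> 'v graph \<Rightarrow> 'v graph \<Rightarrow> bool" where
  "iso_fixing Y G H \<longleftrightarrow> (\<exists>f. bij_betw f (verts G) (verts H) \<and> (\<forall>y\<in>Y. f y = y) \<and>
     (\<forall>u\<in>verts G. \<forall>v\<in>verts G. {u, v} \<in> edges G \<longleftrightarrow> {f u, f v} \<in> edges H))"

text \<open>T[Y]: the minimal subtree of T connecting Y (union of the paths between
  elements of Y).\<close>
definition span :: "'v graph \<Rightarrow> 'v set \<Rightarrow> 'v graph" where
  "span T Y = (\<Union>{set p | p a b. a \<in> Y \<and> b \<in> Y \<and> is_path T a b p},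
               \<Union>{list_edges p | p a b. a \<in> Y \<and> b \<in> Y \<and> is_path T a b p})"

text \<open>T|Y: T[Y] with all degree-2 vertices suppressed.\<close>
definition restr :: "'v graph \<Rightarrow> 'v set \<Rightarrow> 'v graph" where
  "restr T Y = (let S = span T Y;
                    K = {v \<in> verts S. degree S v \<noteq> 2}
     in (K, {{u, w} | u w. u \<in> K \<and> w \<in> K \<and> u \<noteq> w \<and>
              (\<exists>p. is_path S u w p \<and>
                   (\<forall>i. 0 < i \<and> Suc i < length p \<longrightarrow> degree S (p ! i) = 2))}))"

definition is_partition :: "'v set set \<Rightarrow> 'v set \<Rightarrow> bool" where
  "is_partition P X \<longleftrightarrow> (\<forall>Y\<in>P. Y \<noteq> {}) \<and> \<Union>P = X \<and>
     (\<forall>Y\<in>P. \<forall>Z\<in>P. Y \<noteq> Z \<longrightarrow> Y \<inter> Z = {})"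

definition agreement_forest :: "'v set \<Rightarrow> (nat \<Rightarrow> 'v graph) \<Rightarrow> nat \<Rightarrow> 'v set set \<Rightarrow> bool" where
  "agreement_forest X T t P \<longleftrightarrow> is_partition P X \<and>
     (\<forall>i\<in>{1..t}. \<forall>j\<in>{1..t}. \<forall>Y\<in>P. iso_fixing Y (restr (T i) Y) (restr (T j) Y)) \<and>
     (\<forall>i\<in>{1..t}. \<forall>Y\<in>P. \<forall>Z\<in>P. Y \<noteq> Z \<longrightarrow> verts (span (T i) Y) \<inter> verts (span (T i) Z) = {})"

definition is_quartet :: "'v set \<Rightarrow> 'v set \<Rightarrow> bool" where
  "is_quartet X Q \<longleftrightarrow> Q \<subseteq> X \<and> card Q = 4"

definition is_split :: "'v graph \<Rightarrow> 'v \<Rightarrow> 'v \<Rightarrow> 'v \<Rightarrow> 'v \<Rightarrow> bool" where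
  "is_split G a b c d \<longleftrightarrow> (\<exists>u v. distinct [a, b, c, d, u, v] \<and>
     iso_fixing {a, b, c, d} G
       ({a, b, c, d, u, v}, {{a, u}, {b, u}, {c, v}, {d, v}, {u, v}}))"

definition incompatible_quartets :: "'v set \<Rightarrow> 'v graph \<Rightarrow> 'v graph \<Rightarrow> 'v set set" where
  "incompatible_quartets X Ti Tj =
     {Q. is_quartet X Q \<and> \<not> iso_fixing Q (restr Ti Q) (restr Tj Q)}"

definition all_incompatible :: "'v set \<Rightarrow> (nat \<Rightarrow> 'v graph) \<Rightarrow> nat \<Rightarrow> 'v set set" where
  "all_incompatible X T t = (\<Union>i\<in>{2..t}. incompatible_quartets X (T 1) (T i))"

text \<open>L(Q) for T1|Q = ab|cd.\<close>
definition L_edges :: "'v graph \<Rightarrow> 'v \<Rightarrow> 'v \<Rightarrow> 'v \<Rightarrow> 'v \<Rightarrow> 'v set set" where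
  "L_edges T1 a b c d = edges (span T1 {a, b}) \<union> edges (span T1 {c, d})"

definition ip_feasible :: "'v set \<Rightarrow> (nat \<Rightarrow> 'v graph) \<Rightarrow> nat \<Rightarrow> ('v set \<Rightarrow> int) \<Rightarrow> bool" where
  "ip_feasible X T t x \<longleftrightarrow> (\<forall>e\<in>edges (T 1). x e \<in> {0, 1}) \<and>
     (\<forall>Q\<in>all_incompatible X T t. \<forall>a b c d.
        Q = {a, b, c, d} \<and> is_split (restr (T 1) Q) a b c d \<longrightarrow>
        (\<Sum>e\<in>L_edges (T 1) a b c d. x e) \<ge> 1)"

definition forest_of :: "'v set \<Rightarrow> 'v graph \<Rightarrow> 'v set set \<Rightarrow> 'v set set" where
  "forest_of X T1 E = {{b \<in> X. edges (span T1 {a, b}) \<inter> E = {}} | a. a \<in> X}"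

end

theory Submission
  imports Defs
begin
lemma is_walk_single[simp]: "is_walk G [x] \<longleftrightarrow> x \<in> verts G"
  by (auto simp: is_walk_def)

lemma is_walk_Cons2: "is_walk G (x # y # p) \<longleftrightarrow> x \<in> verts G \<and> {x,y} \<in> edges G \<and> is_walk G (y # p)"
proof -
  have "(\<forall>i. Suc i < length (x#y#p) \<longrightarrow> {(x#y#p) ! i, (x#y#p) ! Suc i} \<in> edges G)
     \<longleftrightarrow> {x,y} \<in> edges G \<and> (\<forall>i. Suc i < length (y#p) \<longrightarrow> {(y#p) ! i, (y#p) ! Suc i} \<in> edges G)"
    (is "?A \<longleftrightarrow> ?B")
  proof
    assume ?A
    then show ?B by (metis Suc_less_eq length_Cons nth_Cons_0 nth_Cons_Suc zero_less_Suc)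
  next
    assume ?B
    show ?A
    proof (intro allI impI)
      fix i assume "Suc i < length (x#y#p)"
      then show "{(x#y#p) ! i, (x#y#p) ! Suc i} \<in> edges G"
        using \<open>?B\<close> by (cases i) auto
    qed
  qed
  then show ?thesis unfolding is_walk_def by auto
qed

lemma list_edges_Nil[simp]: "list_edges [] = {}" by (auto simp: list_edges_def)
lemma list_edges_single[simp]: "list_edges [x] = {}" by (auto simp: list_edges_def)
lemma list_edges_Cons2: "list_edges (x # y # p) = insert {x,y} (list_edges (y # p))"
proof -
  have "list_edges (x # y # p) = {{(x#y#p) ! i, (x#y#p) ! Suc i} | i. Suc i < length (x#y#p)}"
    by (simp add: list_edges_def)
  also have "\<dots> = insert {x,y} {{(y#p) ! i, (y#p) ! Suc i} | i. Suc i < length (y#p)}"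
  proof (rule set_eqI, rule iffI)
    fix e assume "e \<in> {{(x#y#p) ! i, (x#y#p) ! Suc i} | i. Suc i < length (x#y#p)}"
    then obtain i where "e = {(x#y#p) ! i, (x#y#p) ! Suc i}" "Suc i < length (x#y#p)" by auto
    then show "e \<in> insert {x,y} {{(y#p) ! i, (y#p) ! Suc i} | i. Suc i < length (y#p)}"
      by (cases i) auto
  next
    fix e assume "e \<in> insert {x,y} {{(y#p) ! i, (y#p) ! Suc i} | i. Suc i < length (y#p)}"
    then show "e \<in> {{(x#y#p) ! i, (x#y#p) ! Suc i} | i. Suc i < length (x#y#p)}"
    proof
      assume "e = {x,y}" then show ?thesis by force
    next
      assume "e \<in> {{(y#p) ! i, (y#p) ! Suc i} | i. Suc i < length (y#p)}"
      then obtain i where "e = {(y#p) ! i, (y#p) ! Suc i}" "Suc i < length (y#p)" by auto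
      then show ?thesis by (auto intro!: exI[of _ "Suc i"])
    qed
  qed
  finally show ?thesis by (simp add: list_edges_def)
qed

lemma is_walk_Nil[simp]: "\<not> is_walk G []" by (simp add: is_walk_def)

lemma is_walk_ConsD: "is_walk G (x # p) \<Longrightarrow> p \<noteq> [] \<Longrightarrow> is_walk G p"
  by (cases p) (auto simp: is_walk_Cons2)

lemma is_walk_append:
  "p \<noteq> [] \<Longrightarrow> q \<noteq> [] \<Longrightarrow> is_walk G (p @ q) \<longleftrightarrow> is_walk G p \<and> is_walk G q \<and> {last p, hd q} \<in> edges G"
proof (induction p rule: induct_list012)
  case 1 then show ?case by simp
next
  case (2 x) then show ?case by (cases q) (auto simp: is_walk_Cons2)
next
  case (3 x y zs) then show ?case by (simp add: is_walk_Cons2)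
qed

lemma list_edges_append:
  "p \<noteq> [] \<Longrightarrow> q \<noteq> [] \<Longrightarrow> list_edges (p @ q) = list_edges p \<union> list_edges q \<union> {{last p, hd q}}"
proof (induction p rule: induct_list012)
  case 1 then show ?case by simp
next
  case (2 x) then show ?case by (cases q) (auto simp: list_edges_Cons2)
next
  case (3 x y zs) then show ?case by (auto simp: list_edges_Cons2)
qed

lemma is_walk_rev: "is_walk G p \<Longrightarrow> is_walk G (rev p)"
proof (induction p)
  case (Cons x p)
  show ?case
  proof (cases "p = []")
    case True then show ?thesis using Cons by simp
  next
    case False
    then have "is_walk G p" using Cons.prems is_walk_ConsD by metis
    then have w: "is_walk G (rev p)" using Cons.IH by simp
    obtain y q where pq: "p = y # q" using False by (cases p) auto
    have e: "{x, hd p} \<in> edges G" "x \<in> verts G" using Cons.prems pq by (auto simp: is_walk_Cons2)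
    have "{last (rev p), hd [x]} = {x, hd p}" using False by (auto simp: last_rev)
    then have "is_walk G (rev p @ [x])" using w e False by (subst is_walk_append) auto
    then show ?thesis by simp
  qed
qed simp

lemma list_edges_rev: "list_edges (rev p) = list_edges p"
proof (induction p)
  case (Cons x p)
  show ?case
  proof (cases "p = []")
    case True then show ?thesis by simp
  next
    case False
    obtain y q where pq: "p = y # q" using False by (cases p) auto
    have "list_edges (rev p @ [x]) = list_edges (rev p) \<union> {{last (rev p), hd [x]}}"
      using False by (subst list_edges_append) auto
    also have "\<dots> = list_edges (x # p)" using pq Cons.IH False by (auto simp: list_edges_Cons2 last_rev)
    finally show ?thesis by simp
  qed
qed simp

lemma is_path_rev: "is_path G u w p \<Longrightarrow> is_path G w u (rev p)"
  by (auto simp: is_path_def is_walk_rev hd_rev last_rev)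

lemma is_walk_set: "is_walk G p \<Longrightarrow> set p \<subseteq> verts G" by (simp add: is_walk_def)

lemma list_edges_subset: "is_walk G p \<Longrightarrow> list_edges p \<subseteq> edges G"
  by (auto simp: is_walk_def list_edges_def)

lemma is_walk_take: "is_walk G p \<Longrightarrow> 0 < k \<Longrightarrow> is_walk G (take k p)"
  by (auto simp: is_walk_def) (meson in_set_takeD subsetD)

lemma is_walk_drop: "is_walk G p \<Longrightarrow> k < length p \<Longrightarrow> is_walk G (drop k p)"
  by (auto simp: is_walk_def dest: in_set_dropD)

lemma walk_prefix: "is_walk G (xs @ ys) \<Longrightarrow> xs \<noteq> [] \<Longrightarrow> is_walk G xs"
  by (cases "ys = []") (auto simp: is_walk_append)

lemma walk_suffix: "is_walk G (xs @ ys) \<Longrightarrow> ys \<noteq> [] \<Longrightarrow> is_walk G ys"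
  by (cases "xs = []") (auto simp: is_walk_append)

lemma list_edges_prefix: "list_edges xs \<subseteq> list_edges (xs @ ys)"
  by (cases "xs = []"; cases "ys = []") (auto simp: list_edges_append)

lemma list_edges_suffix: "list_edges ys \<subseteq> list_edges (xs @ ys)"
  by (cases "xs = []"; cases "ys = []") (auto simp: list_edges_append)

lemma walk_glue: "is_walk G (xs @ [z]) \<Longrightarrow> is_walk G (z # ys) \<Longrightarrow> is_walk G (xs @ z # ys)"
proof (cases "xs = []")
  case False
  assume a: "is_walk G (xs @ [z])" "is_walk G (z # ys)"
  then have "is_walk G xs" "{last xs, z} \<in> edges G" using False by (auto simp: is_walk_append)
  then show ?thesis using a False by (subst is_walk_append) auto
qed simp

lemma list_edges_glue: "list_edges (xs @ z # ys) = list_edges (xs @ [z]) \<union> list_edges (z # ys)"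
proof (cases "xs = []")
  case False
  then show ?thesis using list_edges_append[of xs "z#ys"] list_edges_append[of xs "[z]"] by auto
qed simp

lemma walk_to_path:
  "is_walk G p \<Longrightarrow> \<exists>q. is_path G (hd p) (last p) q \<and> set q \<subseteq> set p \<and> list_edges q \<subseteq> list_edges p"
proof (induction "length p" arbitrary: p rule: less_induct)
  case less
  show ?case
  proof (cases "distinct p")
    case True then show ?thesis using less.prems by (auto simp: is_path_def)
  next
    case False
    from not_distinct_decomp[OF False] obtain A B C z where "p = A @ [z] @ B @ [z] @ C" by blast
    then have p: "p = A @ z # B @ z # C" by simp
    have w1: "is_walk G (A @ [z])" using less.prems p walk_prefix[of G "A @ [z]" "B @ z # C"] by simp
    have w2: "is_walk G (z # C)" using less.prems p walk_suffix[of G "A @ z # B" "z # C"] by simp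
    have w: "is_walk G (A @ z # C)" using walk_glue[OF w1 w2] .
    have e1: "list_edges (A @ [z]) \<subseteq> list_edges p" using p list_edges_prefix[of "A @ [z]" "B @ z # C"] by simp
    have e2: "list_edges (z # C) \<subseteq> list_edges p" using p list_edges_suffix[of "z # C" "A @ z # B"] by simp
    have e: "list_edges (A @ z # C) \<subseteq> list_edges p" using e1 e2 list_edges_glue[of A z C] by auto
    have "length (A @ z # C) < length p" using p by simp
    from less.hyps[OF this w] obtain q where q: "is_path G (hd (A @ z # C)) (last (A @ z # C)) q"
      "set q \<subseteq> set (A @ z # C)" "list_edges q \<subseteq> list_edges (A @ z # C)" by blast
    have "hd (A @ z # C) = hd p" "last (A @ z # C) = last p" using p by (cases A; simp)+
    then have "is_path G (hd p) (last p) q" using q(1) by simp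
    moreover have "set q \<subseteq> set p" using q(2) p by auto
    moreover have "list_edges q \<subseteq> list_edges p" using q(3) e by blast
    ultimately show ?thesis by blast
  qed
qed

lemma is_path_hd_last: "is_path G u w p \<Longrightarrow> hd p = u \<and> last p = w" by (simp add: is_path_def)

lemma distinct_hd_last: "distinct p \<Longrightarrow> p \<noteq> [] \<Longrightarrow> hd p = last p \<Longrightarrow> p = [hd p]"
proof (cases p)
  case (Cons a l)
  assume "distinct p" "hd p = last p"
  then show ?thesis using Cons by (cases "l = []") (auto simp: last_in_set)
qed simp

locale tree =
  fixes T :: "'v graph"
  assumes tree: "is_tree T"
begin

lemma wf: "wf_graph T" using tree by (simp add: is_tree_def)
lemma acyc: "acyclic_graph T" using tree by (simp add: is_tree_def)
lemma conn: "connected_graph T" using tree by (simp add: is_tree_def)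

lemma path_unique: "is_path T u w p \<Longrightarrow> is_path T u w q \<Longrightarrow> p = q"
proof (induction "length p" arbitrary: u p q rule: less_induct)
  case less
  obtain p' where pp: "p = u # p'" using less.prems(1) by (cases p) (auto simp: is_path_def)
  obtain q' where qq: "q = u # q'" using less.prems(2) by (cases q) (auto simp: is_path_def)
  show ?case
  proof (cases "p' = [] \<or> q' = []")
    case True
    then have "u = w" using less.prems pp qq by (auto simp: is_path_def)
    then show ?thesis using less.prems pp qq distinct_hd_last[of p] distinct_hd_last[of q]
      by (auto simp: is_path_def)
  next
    case False
    then have np: "p' \<noteq> []" and nq: "q' \<noteq> []" by auto
    have pw': "is_walk T p'" "is_walk T q'" using less.prems pp qq np nq is_walk_ConsD[of T u p'] is_walk_ConsD[of T u q'] by (auto simp: is_path_def)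
    have lastp: "last p' = w" "last q' = w" using less.prems pp qq np nq by (auto simp: is_path_def)
    show ?thesis
    proof (cases "hd p' = hd q'")
      case True
      have "is_path T (hd p') w p'" "is_path T (hd p') w q'" using pw' lastp True less.prems pp qq
        by (auto simp: is_path_def)
      then have "p' = q'" using less.hyps[of p' "hd p'" q'] pp by simp
      then show ?thesis using pp qq by simp
    next
      case False
      have "\<exists>x\<in>set p'. x \<in> set q'" using lastp np nq by (metis last_in_set)
      then obtain A z B where pA: "p' = A @ z # B" and zq: "z \<in> set q'" and Aq: "\<forall>y\<in>set A. y \<notin> set q'"
        using split_list_first_prop[of p' "\<lambda>x. x \<in> set q'"] by blast
      obtain C D where qC: "q' = C @ z # D" using zq split_list by metis
      define c where "c = (u # A) @ rev (C @ [z])"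
      have dp: "distinct p" "distinct q" using less.prems by (auto simp: is_path_def)
      have dc: "distinct c" using dp pp qq pA qC Aq by (auto simp: c_def)
      have wp: "is_walk T p" "is_walk T q" using less.prems by (auto simp: is_path_def)
      have w1: "is_walk T (u # A @ [z])" using wp(1) pp pA walk_prefix[of T "u # A @ [z]" B] by simp
      have w2: "is_walk T (C @ [z])" using wp(2) qq qC walk_prefix[of T "u # C @ [z]" D]
        walk_suffix[of T "[u]" "C @ [z]"] by simp
      have wc: "is_walk T c" unfolding c_def
        using w1 is_walk_rev[OF w2] walk_prefix[of T "u # A" "[z]"] is_walk_append[of "u # A" "[z]" T]
        by (subst is_walk_append) auto
      have ne: "A \<noteq> [] \<or> C \<noteq> []" using False pA qC by auto
      have len: "length c \<ge> 3" using ne by (auto simp: c_def Suc_le_eq)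
      have lc: "last c = hd q'" using qC by (cases C) (auto simp: c_def)
      have "{u, hd q'} \<in> edges T" using wp(2) qq nq by (cases q') (auto simp: is_walk_Cons2)
      then have "{last c, hd c} \<in> edges T" using lc by (simp add: c_def insert_commute)
      then show ?thesis using acyc wc dc len by (auto simp: acyclic_graph_def)
    qed
  qed
qed

definition tp :: "'v \<Rightarrow> 'v \<Rightarrow> 'v list" where
  "tp u w = (THE p. is_path T u w p)"

lemma tp_path: "u \<in> verts T \<Longrightarrow> w \<in> verts T \<Longrightarrow> is_path T u w (tp u w)"
proof -
  assume "u \<in> verts T" "w \<in> verts T"
  then obtain p where p: "is_path T u w p" using conn by (auto simp: connected_graph_def)
  have "\<exists>!p. is_path T u w p" using p path_unique by blast
  then show ?thesis unfolding tp_def by (rule theI')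
qed

lemma tp_eq: assumes h: "is_path T u w p" shows "tp u w = p"
  unfolding tp_def by (rule the_equality[where P="\<lambda>p. is_path T u w p", OF h]) (rule path_unique[OF _ h])

end

context tree begin

lemma tp_props:
  assumes "u \<in> verts T" "w \<in> verts T"
  shows "tp u w \<noteq> []" "hd (tp u w) = u" "last (tp u w) = w" "distinct (tp u w)"
    "is_walk T (tp u w)" "set (tp u w) \<subseteq> verts T" "u \<in> set (tp u w)" "w \<in> set (tp u w)"
proof -
  have p: "is_path T u w (tp u w)" using tp_path[OF assms] .
  show "tp u w \<noteq> []" "hd (tp u w) = u" "last (tp u w) = w" "distinct (tp u w)" "is_walk T (tp u w)"
    using p by (auto simp: is_path_def)
  show "set (tp u w) \<subseteq> verts T" using p by (simp add: is_path_def is_walk_def)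
  show "u \<in> set (tp u w)" "w \<in> set (tp u w)" using p unfolding is_path_def
    by (metis hd_in_set is_walk_Nil, metis last_in_set is_walk_Nil)
qed

lemma tp_refl: assumes "u \<in> verts T" shows "tp u u = [u]"
proof -
  have "is_path T u u [u]" using assms by (simp add: is_path_def)
  then show ?thesis by (rule tp_eq)
qed

lemma tp_rev: assumes "u \<in> verts T" "w \<in> verts T" shows "tp w u = rev (tp u w)"
proof -
  have "is_path T w u (rev (tp u w))" using is_path_rev[OF tp_path[OF assms]] .
  then show ?thesis by (rule tp_eq)
qed

lemma tp_set_sym: "u \<in> verts T \<Longrightarrow> w \<in> verts T \<Longrightarrow> set (tp w u) = set (tp u w)"
  using tp_rev[of u w] by simp

lemma tp_edges_sym: "u \<in> verts T \<Longrightarrow> w \<in> verts T \<Longrightarrow> list_edges (tp w u) = list_edges (tp u w)"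
  using tp_rev[of u w] by (simp add: list_edges_rev)

lemma tp_split:
  assumes u: "u \<in> verts T" and w: "w \<in> verts T" and x: "x \<in> set (tp u w)"
  shows "\<exists>A B. tp u w = A @ x # B \<and> tp u x = A @ [x] \<and> tp x w = x # B"
proof -
  obtain A B where AB: "tp u w = A @ x # B" using x split_list by metis
  have p: "is_path T u w (tp u w)" using tp_path[OF u w] .
  have "is_walk T (A @ [x])" using p AB walk_prefix[of T "A @ [x]" B] by (simp add: is_path_def)
  moreover have "hd (A @ [x]) = u" using p AB by (cases A) (auto simp: is_path_def)
  ultimately have "is_path T u x (A @ [x])" using p AB by (auto simp: is_path_def)
  then have 1: "tp u x = A @ [x]" by (rule tp_eq)
  have "is_walk T (x # B)" using p AB walk_suffix[of T A "x # B"] by (simp add: is_path_def)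
  moreover have "last (x # B) = w" using p AB by (auto simp: is_path_def)
  ultimately have "is_path T x w (x # B)" using p AB by (auto simp: is_path_def)
  then have 2: "tp x w = x # B" by (rule tp_eq)
  show ?thesis using AB 1 2 by blast
qed

lemma tp_split_sets:
  assumes u: "u \<in> verts T" and w: "w \<in> verts T" and x: "x \<in> set (tp u w)"
  shows "set (tp u w) = set (tp u x) \<union> set (tp x w)"
    "set (tp u x) \<inter> set (tp x w) = {x}"
    "list_edges (tp u w) = list_edges (tp u x) \<union> list_edges (tp x w)"
    "set (tp u x) \<subseteq> set (tp u w)" "set (tp x w) \<subseteq> set (tp u w)"
    "list_edges (tp u x) \<subseteq> list_edges (tp u w)" "list_edges (tp x w) \<subseteq> list_edges (tp u w)"
proof -
  obtain A B where AB: "tp u w = A @ x # B" "tp u x = A @ [x]" "tp x w = x # B"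
    using tp_split[OF assms] by blast
  have d: "distinct (A @ x # B)" using tp_props(4)[OF u w] AB by simp
  show "set (tp u w) = set (tp u x) \<union> set (tp x w)" using AB by auto
  show "set (tp u x) \<inter> set (tp x w) = {x}" using AB d by auto
  show le: "list_edges (tp u w) = list_edges (tp u x) \<union> list_edges (tp x w)"
    using AB list_edges_glue by metis
  show "set (tp u x) \<subseteq> set (tp u w)" "set (tp x w) \<subseteq> set (tp u w)" using AB by auto
  show "list_edges (tp u x) \<subseteq> list_edges (tp u w)" "list_edges (tp x w) \<subseteq> list_edges (tp u w)"
    using le by auto
qed

lemma tp_verts: "u \<in> verts T \<Longrightarrow> w \<in> verts T \<Longrightarrow> x \<in> set (tp u w) \<Longrightarrow> x \<in> verts T"
  using tp_props(6) by blast

lemma walk_tp: "is_walk T p \<Longrightarrow> set (tp (hd p) (last p)) \<subseteq> set p \<and> list_edges (tp (hd p) (last p)) \<subseteq> list_edges p"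
  using walk_to_path[of T p] tp_eq by metis

lemma triangle:
  assumes u: "u \<in> verts T" and x: "x \<in> verts T" and w: "w \<in> verts T"
  shows "set (tp u w) \<subseteq> set (tp u x) \<union> set (tp x w)"
    "list_edges (tp u w) \<subseteq> list_edges (tp u x) \<union> list_edges (tp x w)"
proof -
  obtain A where A: "tp u x = A @ [x]"
    using tp_props(1,3)[OF u x] by (metis append_butlast_last_id)
  obtain B where B: "tp x w = x # B"
    using tp_props(1,2)[OF x w] by (metis list.collapse)
  have wk: "is_walk T (A @ x # B)" using walk_glue[of T A x B] tp_props(5)[OF u x] tp_props(5)[OF x w] A B by simp
  have "hd (A @ x # B) = u" using tp_props(2)[OF u x] A by (cases A) auto
  moreover have "last (A @ x # B) = w" using tp_props(3)[OF x w] B by (cases B) auto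
  ultimately have "set (tp u w) \<subseteq> set (A @ x # B)" "list_edges (tp u w) \<subseteq> list_edges (A @ x # B)"
    using walk_tp[OF wk] by auto
  then show "set (tp u w) \<subseteq> set (tp u x) \<union> set (tp x w)"
    "list_edges (tp u w) \<subseteq> list_edges (tp u x) \<union> list_edges (tp x w)"
    using A B list_edges_glue[of A x B] by auto
qed

lemma between_antisym:
  assumes "a \<in> verts T" "m \<in> verts T" "x \<in> set (tp a m)" "m \<in> set (tp a x)"
  shows "x = m"
proof -
  have "x \<in> verts T" using assms tp_verts by blast
  have "m \<in> set (tp x m)" using tp_props(8)[OF \<open>x \<in> verts T\<close> assms(2)] .
  then show ?thesis using tp_split_sets(2)[OF assms(1,2,3)] assms(4) by auto
qed

lemma median_exists:
  assumes a: "a \<in> verts T" and b: "b \<in> verts T" and c: "c \<in> verts T"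
  shows "\<exists>m. m \<in> set (tp a b) \<and> m \<in> set (tp b c) \<and> m \<in> set (tp a c)"
proof -
  have "\<exists>y\<in>set (tp b c). y \<in> set (tp a b)" using tp_props(7)[OF b c] tp_props(8)[OF a b] by blast
  then obtain R1 m R2 where r: "tp b c = R1 @ m # R2" and m: "m \<in> set (tp a b)"
    and R2: "\<forall>y\<in>set R2. y \<notin> set (tp a b)"
    using split_list_last_prop[of "tp b c" "\<lambda>y. y \<in> set (tp a b)"] by blast
  have mbc: "m \<in> set (tp b c)" using r by simp
  have mv: "m \<in> verts T" using m tp_verts a b by blast
  show ?thesis
  proof (cases R2)
    case Nil
    then have "m = c" using tp_props(3)[OF b c] r by simp
    then show ?thesis using m mbc tp_props(8)[OF a c] by blast
  next
    case (Cons x R3)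
    have xab: "x \<notin> set (tp a b)" using R2 Cons by simp
    have "is_walk T (m # x # R3)" using tp_props(5)[OF b c] r Cons walk_suffix[of T R1 "m # x # R3"] by simp
    then have e: "{m, x} \<in> edges T" and xv: "x \<in> verts T" by (auto simp: is_walk_Cons2 is_walk_def)
    have "x \<in> set (tp b c)" using r Cons by simp
    then have "x \<in> set (tp b a) \<union> set (tp a c)" using triangle(1)[OF b a c] by blast
    then have xac: "x \<in> set (tp a c)" using xab tp_set_sym[OF a b] by blast
    have sub: "set (tp a m) \<subseteq> set (tp a b)" using tp_split_sets(4)[OF a b m] .
    have "is_walk T (tp a m @ [x])"
      using tp_props(1,3,5)[OF a mv] e xv by (subst is_walk_append) auto
    moreover have "distinct (tp a m @ [x])" using tp_props(4)[OF a mv] sub xab by auto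
    moreover have "hd (tp a m @ [x]) = a" using tp_props(1,2)[OF a mv] by simp
    ultimately have "is_path T a x (tp a m @ [x])" by (simp add: is_path_def)
    then have "tp a x = tp a m @ [x]" by (rule tp_eq)
    then have "m \<in> set (tp a x)" using tp_props(8)[OF a mv] by simp
    then have "m \<in> set (tp a c)" using tp_split_sets(4)[OF a c xac] by blast
    then show ?thesis using m mbc by blast
  qed
qed

end

context tree begin

lemma median_unique_aux:
  assumes a: "a \<in> verts T" and b: "b \<in> verts T" and c: "c \<in> verts T"
    and m: "m \<in> set (tp a b)" "m \<in> set (tp b c)" "m \<in> set (tp a c)"
    and m': "m' \<in> set (tp a b)" "m' \<in> set (tp b c)" "m' \<in> set (tp a c)"
    and mb: "m' \<in> set (tp m b)"
  shows "m = m'"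
proof (rule ccontr)
  assume ne: "m \<noteq> m'"
  have mv: "m \<in> verts T" and m'v: "m' \<in> verts T" using m m' a b tp_verts by blast+
  have 1: "m \<notin> set (tp m' b)"
    using tp_split_sets(2)[OF mv b mb] tp_props(7)[OF mv m'v] ne by blast
  have "m' \<in> set (tp a m) \<union> set (tp m c)" using tp_split_sets(1)[OF a c m(3)] m'(3) by blast
  moreover have "m' \<notin> set (tp a m)" using tp_split_sets(2)[OF a b m(1)] mb ne by (metis IntI singletonD)
  ultimately have mc: "m' \<in> set (tp m c)" by blast
  have 2: "m \<notin> set (tp m' c)"
    using tp_split_sets(2)[OF mv c mc] tp_props(7)[OF mv m'v] ne by blast
  have "m \<in> set (tp b m') \<union> set (tp m' c)" using triangle(1)[OF b m'v c] m(2) by blast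
  then show False using 1 2 tp_set_sym[OF m'v b] by blast
qed

lemma median_unique:
  assumes a: "a \<in> verts T" and b: "b \<in> verts T" and c: "c \<in> verts T"
    and m: "m \<in> set (tp a b)" "m \<in> set (tp b c)" "m \<in> set (tp a c)"
    and m': "m' \<in> set (tp a b)" "m' \<in> set (tp b c)" "m' \<in> set (tp a c)"
  shows "m = m'"
proof -
  have mv: "m \<in> verts T" using m a b tp_verts by blast
  have "m' \<in> set (tp a m) \<union> set (tp m b)" using tp_split_sets(1)[OF a b m(1)] m'(1) by blast
  then show ?thesis
  proof
    assume "m' \<in> set (tp m b)"
    then show ?thesis using median_unique_aux[OF a b c m m'] by blast
  next
    assume "m' \<in> set (tp a m)"
    then have "m' \<in> set (tp m a)" using tp_set_sym[OF a mv] by blast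
    moreover have "m \<in> set (tp b a)" "m' \<in> set (tp b a)" using m m' tp_set_sym[OF a b] by auto
    ultimately show ?thesis
      using median_unique_aux[OF b a c _ m(3) m(2) _ m'(3) m'(2)] by blast
  qed
qed

lemma gate_aux:
  assumes a: "a \<in> verts T" and b: "b \<in> verts T" and c: "c \<in> verts T" and d: "d \<in> verts T"
    and m: "m \<in> set (tp a c)"
    and x: "x \<in> set (tp c d)" and xa: "x \<in> set (tp a m)"
  shows "m \<in> set (tp c d)"
proof -
  have mv: "m \<in> verts T" using m a c tp_verts by blast
  have xv: "x \<in> verts T" using x c d tp_verts by blast
  have mca: "m \<in> set (tp c a)" using m tp_set_sym[OF a c] by blast
  have "x \<in> set (tp m a)" using xa tp_set_sym[OF a mv] by blast
  then have xca: "x \<in> set (tp c a)" using tp_split_sets(5)[OF c a mca] by blast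
  have "m \<in> set (tp c x) \<union> set (tp x a)" using tp_split_sets(1)[OF c a xca] mca by blast
  then show ?thesis
  proof
    assume "m \<in> set (tp c x)"
    then show ?thesis using tp_split_sets(4)[OF c d x] by blast
  next
    assume "m \<in> set (tp x a)"
    then have "m \<in> set (tp a x)" using tp_set_sym[OF a xv] by blast
    then have "x = m" using between_antisym[OF a mv xa] by blast
    then show ?thesis using x by simp
  qed
qed

lemma gate:
  assumes a: "a \<in> verts T" and b: "b \<in> verts T" and c: "c \<in> verts T" and d: "d \<in> verts T"
    and m: "m \<in> set (tp a b)" "m \<in> set (tp b c)" "m \<in> set (tp a c)"
    and x: "x \<in> set (tp a b)" "x \<in> set (tp c d)"
  shows "m \<in> set (tp c d)"
proof -
  have mv: "m \<in> verts T" using m a b tp_verts by blast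
  have "x \<in> set (tp a m) \<union> set (tp m b)" using tp_split_sets(1)[OF a b m(1)] x(1) by blast
  then show ?thesis
  proof
    assume "x \<in> set (tp a m)"
    then show ?thesis using gate_aux[OF a b c d m(3) x(2)] by blast
  next
    assume "x \<in> set (tp m b)"
    then have "x \<in> set (tp b m)" using tp_set_sym[OF b mv] by blast
    moreover have "m \<in> set (tp b c)" using m by blast
    ultimately show ?thesis using gate_aux[OF b a c d _ x(2)] by blast
  qed
qed

lemma fin_verts: "finite (verts T)" using wf by (simp add: wf_graph_def)

lemma fin_edges: "finite (edges T)"
proof -
  have "edges T \<subseteq> Pow (verts T)" using wf by (auto simp: wf_graph_def)
  then show ?thesis using fin_verts by (meson finite_Pow_iff finite_subset)
qed

lemma edge_props: "{u, w} \<in> edges T \<Longrightarrow> u \<noteq> w \<and> u \<in> verts T \<and> w \<in> verts T"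
  using wf unfolding wf_graph_def by (metis doubleton_eq_iff insertI1 insert_absorb2 insert_commute singleton_insert_inj_eq)

lemma leaf_on_path:
  assumes a: "a \<in> verts T" and b: "b \<in> verts T" and deg: "degree T x \<le> 1" and x: "x \<in> set (tp a b)"
  shows "x = a \<or> x = b"
proof (rule ccontr)
  assume ne: "\<not> (x = a \<or> x = b)"
  obtain A B where AB: "tp a b = A @ x # B" "tp a x = A @ [x]" "tp x b = x # B"
    using tp_split[OF a b x] by blast
  have xv: "x \<in> verts T" using x a b tp_verts by blast
  have "A \<noteq> []" using AB(2) tp_props(2)[OF a xv] ne by auto
  have "B \<noteq> []" using AB(3) tp_props(3)[OF xv b] ne by auto
  have "is_walk T (A @ [x])" using tp_props(5)[OF a xv] AB(2) by simp
  then have e1: "{last A, x} \<in> edges T" using \<open>A \<noteq> []\<close> by (simp add: is_walk_append)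
  have "is_walk T (x # B)" using tp_props(5)[OF xv b] AB(3) by simp
  then have e2: "{x, hd B} \<in> edges T" using \<open>B \<noteq> []\<close> by (cases B) (auto simp: is_walk_Cons2)
  have "distinct (A @ x # B)" using tp_props(4)[OF a b] AB(1) by simp
  then have "last A \<noteq> hd B" using \<open>A \<noteq> []\<close> \<open>B \<noteq> []\<close> by (metis disjoint_iff distinct_append hd_in_set last_in_set list.set_intros(2))
  then have "{last A, x} \<noteq> {x, hd B}" by (metis doubleton_eq_iff e2 edge_props)
  moreover have "{{last A, x}, {x, hd B}} \<subseteq> {e \<in> edges T. x \<in> e}" using e1 e2 by auto
  moreover have "finite {e \<in> edges T. x \<in> e}" using fin_edges by simp
  ultimately have "card {{last A, x}, {x, hd B}} \<le> degree T x" unfolding degree_def by (metis card_mono)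
  then show False using deg \<open>{last A, x} \<noteq> {x, hd B}\<close> by simp
qed

definition nx :: "'v \<Rightarrow> 'v \<Rightarrow> 'v" where "nx v y = tp v y ! 1"

lemma nx_props:
  assumes v: "v \<in> verts T" and y: "y \<in> verts T" and ne: "v \<noteq> y"
  shows "tp v y = v # tp (nx v y) y" "{v, nx v y} \<in> edges T" "nx v y \<in> verts T"
    "v \<notin> set (tp (nx v y) y)" "nx v y \<in> set (tp v y)"
proof -
  obtain r where r: "tp v y = v # r" using tp_props(1,2)[OF v y] by (metis list.collapse)
  have rne: "r \<noteq> []" using r tp_props(3)[OF v y] ne by auto
  have n: "nx v y = hd r" using r rne by (simp add: nx_def hd_conv_nth)
  have wr: "is_walk T (v # r)" using tp_props(5)[OF v y] r by simp
  then have wr': "is_walk T r" using rne is_walk_ConsD by metis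
  have "is_path T (hd r) y r" using wr' tp_props(3,4)[OF v y] r rne by (auto simp: is_path_def)
  then have tr: "tp (hd r) y = r" by (rule tp_eq)
  show "tp v y = v # tp (nx v y) y" using r tr n by simp
  show "{v, nx v y} \<in> edges T" using wr rne n by (cases r) (auto simp: is_walk_Cons2)
  then show "nx v y \<in> verts T" using edge_props by blast
  show "v \<notin> set (tp (nx v y) y)" using tp_props(4)[OF v y] r tr n by simp
  show "nx v y \<in> set (tp v y)" using r rne n by simp
qed

lemma nx_mid:
  assumes v: "v \<in> verts T" and y: "y \<in> verts T" and m: "m \<in> set (tp v y)" and ne: "m \<noteq> v"
  shows "nx v y = nx v m"
proof -
  have mv: "m \<in> verts T" using m v y tp_verts by blast
  obtain A B where AB: "tp v y = A @ m # B" "tp v m = A @ [m]"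
    using tp_split[OF v y m] by blast
  have "A \<noteq> []" using AB(2) tp_props(2)[OF v mv] ne by auto
  then obtain a0 A' where A: "A = a0 # A'" by (cases A) auto
  show ?thesis unfolding nx_def using AB A by (cases A') auto
qed

lemma sep_nx:
  assumes v: "v \<in> verts T" and x: "x \<in> verts T" and y: "y \<in> verts T" and xv: "x \<noteq> v" and yv: "y \<noteq> v"
  shows "v \<in> set (tp x y) \<longleftrightarrow> nx v x \<noteq> nx v y"
proof
  assume vin: "v \<in> set (tp x y)"
  show "nx v x \<noteq> nx v y"
  proof
    assume eq: "nx v x = nx v y"
    have nv: "nx v x \<in> verts T" using nx_props(3)[OF v x] xv by auto
    have "v \<notin> set (tp (nx v x) x)" using nx_props(4)[OF v x] xv by auto
    then have 1: "v \<notin> set (tp x (nx v x))" using tp_set_sym[OF x nv] by blast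
    have 2: "v \<notin> set (tp (nx v x) y)" using nx_props(4)[OF v y] yv eq by auto
    show False using triangle(1)[OF x nv y] 1 2 vin by blast
  qed
next
  assume neq: "nx v x \<noteq> nx v y"
  show "v \<in> set (tp x y)"
  proof (rule ccontr)
    assume vn: "v \<notin> set (tp x y)"
    obtain m where m: "m \<in> set (tp v x)" "m \<in> set (tp x y)" "m \<in> set (tp v y)"
      using median_exists[OF v x y] by blast
    have "m \<noteq> v" using m(2) vn by blast
    then have "nx v x = nx v m" "nx v y = nx v m" using nx_mid[OF v x m(1)] nx_mid[OF v y m(3)] by auto
    then show False using neq by simp
  qed
qed

lemma edge_tp: assumes "{u, w} \<in> edges T" shows "tp u w = [u, w]"
proof -
  have "u \<noteq> w" "u \<in> verts T" "w \<in> verts T" using edge_props[OF assms] by auto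
  then have "is_path T u w [u, w]" using assms by (simp add: is_path_def is_walk_Cons2)
  then show ?thesis by (rule tp_eq)
qed

end

lemma three_elems:
  assumes "finite S" "card S \<ge> 3"
  shows "\<exists>x y z. x \<in> S \<and> y \<in> S \<and> z \<in> S \<and> x \<noteq> y \<and> y \<noteq> z \<and> x \<noteq> z"
proof -
  have "S \<noteq> {}" using assms by auto
  then obtain x where x: "x \<in> S" by blast
  have c2: "card (S - {x}) \<ge> 2" using assms x by simp
  have "S - {x} \<noteq> {}"
  proof
    assume "S - {x} = {}" then have "card (S - {x}) = 0" by (simp only: card.empty)
    with c2 show False by simp
  qed
  then obtain y where y: "y \<in> S - {x}" by blast
  have c1: "card (S - {x} - {y}) \<ge> 1" using c2 assms y by (simp add: card_Diff_singleton)
  have "S - {x} - {y} \<noteq> {}"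
  proof
    assume "S - {x} - {y} = {}" then have "card (S - {x} - {y}) = 0" by (simp only: card.empty)
    with c1 show False by simp
  qed
  then obtain z where z: "z \<in> S - {x} - {y}" by blast
  show ?thesis using x y z by blast
qed

lemma card_nbrs:
  assumes "\<forall>e\<in>F. \<exists>x y. e = {x, y}" "finite F"
  shows "card {e \<in> F. v \<in> e} = card {n. {v, n} \<in> F}"
proof -
  have "bij_betw (\<lambda>n. {v, n}) {n. {v, n} \<in> F} {e \<in> F. v \<in> e}"
  proof (rule bij_betwI')
    show "\<And>x y. x \<in> {n. {v, n} \<in> F} \<Longrightarrow> y \<in> {n. {v, n} \<in> F} \<Longrightarrow> ({v, x} = {v, y}) = (x = y)"
      by (auto simp: doubleton_eq_iff)
    show "\<And>x. x \<in> {n. {v, n} \<in> F} \<Longrightarrow> {v, x} \<in> {e \<in> F. v \<in> e}" by simp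
    fix e assume e: "e \<in> {e \<in> F. v \<in> e}"
    then obtain x y where xy: "e = {x, y}" using assms(1) by blast
    then have "e = {v, if v = x then y else x}" using e by auto
    then show "\<exists>n\<in>{n. {v, n} \<in> F}. e = {v, n}" using e by (intro bexI[of _ "if v = x then y else x"]) auto
  qed
  then show ?thesis by (simp add: bij_betw_same_card)
qed

lemma list_edges_set: "{x, y} \<in> list_edges p \<Longrightarrow> x \<in> set p \<and> y \<in> set p"
proof -
  assume "{x, y} \<in> list_edges p"
  then obtain i where i: "{x, y} = {p ! i, p ! Suc i}" "Suc i < length p" unfolding list_edges_def by blast
  then have "p ! i \<in> set p" "p ! Suc i \<in> set p" by auto
  moreover have "x \<in> {p ! i, p ! Suc i}" "y \<in> {p ! i, p ! Suc i}" using i(1) by blast+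
  ultimately show ?thesis by blast
qed

locale ltree = tree T for T :: "'v graph" +
  fixes X :: "'v set"
  assumes phylo: "phylo_tree X T"
begin

lemma X_verts: "X \<subseteq> verts T" using phylo by (simp add: phylo_tree_def)
lemma deg_leaf: "x \<in> X \<Longrightarrow> degree T x \<le> 1" using phylo by (simp add: phylo_tree_def)
lemma deg_int: "v \<in> verts T \<Longrightarrow> v \<notin> X \<Longrightarrow> degree T v = 3" using phylo by (simp add: phylo_tree_def)

lemma edges_pairs: "\<forall>e\<in>edges T. \<exists>x y. e = {x, y}" using wf unfolding wf_graph_def by blast

lemma leaf_path: "x \<in> X \<Longrightarrow> a \<in> verts T \<Longrightarrow> b \<in> verts T \<Longrightarrow> x \<in> set (tp a b) \<Longrightarrow> x = a \<or> x = b"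
  using leaf_on_path deg_leaf by blast

lemma tp_edges_T: "a \<in> verts T \<Longrightarrow> b \<in> verts T \<Longrightarrow> list_edges (tp a b) \<subseteq> edges T"
  using list_edges_subset tp_props(5) by blast

definition VY :: "'v set \<Rightarrow> 'v set" where
  "VY Y = {v. \<exists>a\<in>Y. \<exists>b\<in>Y. v \<in> set (tp a b)}"
definition EY :: "'v set \<Rightarrow> 'v set set" where
  "EY Y = {e. \<exists>a\<in>Y. \<exists>b\<in>Y. e \<in> list_edges (tp a b)}"
definition MY :: "'v set \<Rightarrow> 'v set" where
  "MY Y = {v. \<exists>a\<in>Y. \<exists>b\<in>Y. \<exists>c\<in>Y. a \<noteq> b \<and> b \<noteq> c \<and> a \<noteq> c \<and>
      v \<in> set (tp a b) \<and> v \<in> set (tp b c) \<and> v \<in> set (tp a c)}"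
definition KY :: "'v set \<Rightarrow> 'v set" where
  "KY Y = Y \<union> MY Y"
definition PY :: "'v set \<Rightarrow> 'v \<Rightarrow> ('v \<times> 'v) set" where
  "PY Y v = {(a, b). a \<in> Y \<and> b \<in> Y \<and> v \<in> set (tp a b)}"

context
  fixes Y assumes Y: "Y \<subseteq> X"
begin

lemma Yv: "y \<in> Y \<Longrightarrow> y \<in> verts T" using Y X_verts by blast

lemma span_eq: "span T Y = (VY Y, EY Y)"
proof -
  have 1: "\<And>a b p. a \<in> Y \<Longrightarrow> b \<in> Y \<Longrightarrow> is_path T a b p \<longleftrightarrow> p = tp a b"
    using tp_eq tp_path Yv by blast
  have "\<Union>{set p | p a b. a \<in> Y \<and> b \<in> Y \<and> is_path T a b p} = VY Y"
  proof (rule set_eqI, rule iffI)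
    fix x assume "x \<in> \<Union>{set p | p a b. a \<in> Y \<and> b \<in> Y \<and> is_path T a b p}"
    then obtain p a b where "x \<in> set p" "a \<in> Y" "b \<in> Y" "is_path T a b p" by auto
    then show "x \<in> VY Y" unfolding VY_def using 1 by auto
  next
    fix x assume "x \<in> VY Y"
    then obtain a b where "x \<in> set (tp a b)" "a \<in> Y" "b \<in> Y" unfolding VY_def by auto
    then show "x \<in> \<Union>{set p | p a b. a \<in> Y \<and> b \<in> Y \<and> is_path T a b p}" using 1 by blast
  qed
  moreover have "\<Union>{list_edges p | p a b. a \<in> Y \<and> b \<in> Y \<and> is_path T a b p} = EY Y"
  proof (rule set_eqI, rule iffI)
    fix x assume "x \<in> \<Union>{list_edges p | p a b. a \<in> Y \<and> b \<in> Y \<and> is_path T a b p}"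
    then obtain p a b where "x \<in> list_edges p" "a \<in> Y" "b \<in> Y" "is_path T a b p" by auto
    then show "x \<in> EY Y" unfolding EY_def using 1 by auto
  next
    fix x assume "x \<in> EY Y"
    then obtain a b where "x \<in> list_edges (tp a b)" "a \<in> Y" "b \<in> Y" unfolding EY_def by auto
    then show "x \<in> \<Union>{list_edges p | p a b. a \<in> Y \<and> b \<in> Y \<and> is_path T a b p}" using 1 by blast
  qed
  ultimately show ?thesis unfolding span_def by simp
qed

lemma VY_verts: "VY Y \<subseteq> verts T" unfolding VY_def using Yv tp_verts by blast
lemma EY_edges: "EY Y \<subseteq> edges T" unfolding EY_def using Yv tp_edges_T by blast
lemma Y_VY: "Y \<subseteq> VY Y" unfolding VY_def using Yv tp_props(7) by blast
lemma MY_VY: "MY Y \<subseteq> VY Y" unfolding VY_def MY_def by blast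
lemma KY_VY: "KY Y \<subseteq> VY Y" unfolding KY_def using Y_VY MY_VY by blast
lemma MY_Y: "MY Y \<inter> Y = {}"
proof -
  { fix v assume "v \<in> MY Y" "v \<in> Y"
    then obtain a b c where abc: "a \<in> Y" "b \<in> Y" "c \<in> Y" "a \<noteq> b" "b \<noteq> c" "a \<noteq> c"
      "v \<in> set (tp a b)" "v \<in> set (tp b c)" "v \<in> set (tp a c)" unfolding MY_def by blast
    have "v \<in> X" using \<open>v \<in> Y\<close> Y by blast
    have "v = a \<or> v = b" using leaf_path[OF \<open>v \<in> X\<close> _ _ abc(7)] Yv abc by blast
    moreover have "v = b \<or> v = c" using leaf_path[OF \<open>v \<in> X\<close> _ _ abc(8)] Yv abc by blast
    moreover have "v = a \<or> v = c" using leaf_path[OF \<open>v \<in> X\<close> _ _ abc(9)] Yv abc by blast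
    ultimately have False using abc by auto }
  then show ?thesis by blast
qed

lemma conv:
  assumes u: "u \<in> VY Y" and w: "w \<in> VY Y"
  shows "set (tp u w) \<subseteq> VY Y" "list_edges (tp u w) \<subseteq> EY Y"
proof -
  obtain a b where ab: "a \<in> Y" "b \<in> Y" "u \<in> set (tp a b)" using u unfolding VY_def by blast
  obtain c d where cd: "c \<in> Y" "d \<in> Y" "w \<in> set (tp c d)" using w unfolding VY_def by blast
  have av: "a \<in> verts T" and bv: "b \<in> verts T" and cv: "c \<in> verts T" and dv: "d \<in> verts T"
    using ab cd Yv by auto
  have uv: "u \<in> verts T" and wv: "w \<in> verts T" using u w VY_verts by auto
  have s1: "set (tp u w) \<subseteq> set (tp u a) \<union> set (tp a w)" using triangle(1)[OF uv av wv] .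
  have s2: "set (tp u a) \<subseteq> set (tp a b)" using tp_split_sets(4)[OF av bv ab(3)] tp_set_sym[OF av uv] by simp
  have s3: "set (tp a w) \<subseteq> set (tp a c) \<union> set (tp c w)" using triangle(1)[OF av cv wv] .
  have s4: "set (tp c w) \<subseteq> set (tp c d)" using tp_split_sets(4)[OF cv dv cd(3)] .
  show "set (tp u w) \<subseteq> VY Y" using s1 s2 s3 s4 ab cd unfolding VY_def by blast
  have e1: "list_edges (tp u w) \<subseteq> list_edges (tp u a) \<union> list_edges (tp a w)" using triangle(2)[OF uv av wv] .
  have e2: "list_edges (tp u a) \<subseteq> list_edges (tp a b)" using tp_split_sets(6)[OF av bv ab(3)] tp_edges_sym[OF av uv] by simp
  have e3: "list_edges (tp a w) \<subseteq> list_edges (tp a c) \<union> list_edges (tp c w)" using triangle(2)[OF av cv wv] .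
  have e4: "list_edges (tp c w) \<subseteq> list_edges (tp c d)" using tp_split_sets(6)[OF cv dv cd(3)] .
  show "list_edges (tp u w) \<subseteq> EY Y" using e1 e2 e3 e4 ab cd unfolding EY_def by blast
qed

lemma deg_span: "degree (span T Y) v = card {n. {v, n} \<in> EY Y}"
proof -
  have "degree (span T Y) v = card {e \<in> EY Y. v \<in> e}" by (simp add: degree_def span_eq edges_def)
  also have "\<dots> = card {n. {v, n} \<in> EY Y}"
    using card_nbrs[of "EY Y" v] edges_pairs EY_edges fin_edges finite_subset by blast
  finally show ?thesis .
qed

lemma deg_T: "degree T v = card {n. {v, n} \<in> edges T}"
  unfolding degree_def using card_nbrs[of "edges T" v] edges_pairs fin_edges by blast

lemma nbrs_fin: "finite {n. {v, n} \<in> edges T}"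
proof -
  have "{n. {v, n} \<in> edges T} \<subseteq> verts T" using edge_props by blast
  then show ?thesis using fin_verts finite_subset by blast
qed

lemma NS_eq:
  assumes v: "v \<in> VY Y" "v \<notin> Y"
  shows "{n. {v, n} \<in> EY Y} = nx v ` Y"
proof
  have vv: "v \<in> verts T" using v VY_verts by blast
  show "{n. {v, n} \<in> EY Y} \<subseteq> nx v ` Y"
  proof
    fix n assume "n \<in> {n. {v, n} \<in> EY Y}"
    then obtain a b where ab: "a \<in> Y" "b \<in> Y" "{v, n} \<in> list_edges (tp a b)" unfolding EY_def by blast
    have av: "a \<in> verts T" and bv: "b \<in> verts T" using ab Yv by auto
    have ed: "{v, n} \<in> edges T" using ab(3) tp_edges_T[OF av bv] by blast
    then have nv: "n \<in> verts T" "n \<noteq> v" using edge_props by auto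
    have "n \<in> set (tp a b)" "v \<in> set (tp a b)" using list_edges_set[OF ab(3)] by auto
    then have "n \<in> set (tp a v) \<union> set (tp v b)" using tp_split_sets(1)[OF av bv] by blast
    then obtain y where y: "y \<in> Y" "n \<in> set (tp v y)" using tp_set_sym[OF av vv] ab by blast
    have yv: "y \<in> verts T" using y Yv by auto
    have "nx v y = nx v n" using nx_mid[OF vv yv y(2)] nv by simp
    also have "nx v n = n" unfolding nx_def using edge_tp[OF ed] by simp
    finally show "n \<in> nx v ` Y" using y by force
  qed
  show "nx v ` Y \<subseteq> {n. {v, n} \<in> EY Y}"
  proof
    fix n assume "n \<in> nx v ` Y"
    then obtain y where y: "y \<in> Y" "n = nx v y" by blast
    have yv: "y \<in> verts T" using y Yv by auto
    have yne: "y \<noteq> v" using y v by blast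
    obtain a b where ab: "a \<in> Y" "b \<in> Y" "v \<in> set (tp a b)" using v unfolding VY_def by blast
    have av: "a \<in> verts T" and bv: "b \<in> verts T" using ab Yv by auto
    have "v \<in> set (tp a y) \<union> set (tp y b)" using triangle(1)[OF av yv bv] ab(3) by blast
    then obtain c where c: "c \<in> Y" "v \<in> set (tp c y)" using tp_set_sym[OF yv bv] ab by blast
    have cv: "c \<in> verts T" using c Yv by auto
    have "list_edges (tp v y) \<subseteq> list_edges (tp c y)" using tp_split_sets(7)[OF cv yv c(2)] .
    moreover have "{v, n} \<in> list_edges (tp v y)"
    proof -
      have "tp v y = v # tp n y" using nx_props(1)[OF vv yv] yne y by auto
      moreover obtain r where "tp n y = n # r"
        using tp_props(1,2)[OF nx_props(3)[OF vv yv] yv] yne y by (metis list.collapse)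
      ultimately show ?thesis by (simp add: list_edges_Cons2)
    qed
    ultimately show "n \<in> {n. {v, n} \<in> EY Y}" using c y unfolding EY_def by blast
  qed
qed

lemma int_props:
  assumes v: "v \<in> VY Y" "v \<notin> Y"
  shows "v \<notin> X" "card (nx v ` Y) \<le> 3" "card (nx v ` Y) \<ge> 2"
    "v \<in> MY Y \<longleftrightarrow> card (nx v ` Y) \<ge> 3"
proof -
  have vv: "v \<in> verts T" using v VY_verts by blast
  obtain a b where ab: "a \<in> Y" "b \<in> Y" "v \<in> set (tp a b)" using v unfolding VY_def by blast
  have av: "a \<in> verts T" and bv: "b \<in> verts T" using ab Yv by auto
  show vX: "v \<notin> X"
    using leaf_path[OF _ av bv ab(3)] ab v by blast
  have "nx v ` Y \<subseteq> {n. {v, n} \<in> edges T}"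
    using NS_eq[OF v] EY_edges by blast
  then have "card (nx v ` Y) \<le> card {n. {v, n} \<in> edges T}" using nbrs_fin card_mono by blast
  also have "\<dots> = 3" using deg_T deg_int[OF vv vX] by simp
  finally show "card (nx v ` Y) \<le> 3" .
  have fin: "finite (nx v ` Y)" using \<open>nx v ` Y \<subseteq> _\<close> nbrs_fin finite_subset by blast
  have "a \<noteq> v" "b \<noteq> v" using ab v by auto
  then have "nx v a \<noteq> nx v b" using sep_nx[OF vv av bv] ab by blast
  then have "card {nx v a, nx v b} = 2" by simp
  moreover have "{nx v a, nx v b} \<subseteq> nx v ` Y" using ab by blast
  ultimately show "card (nx v ` Y) \<ge> 2" using fin card_mono by metis
  show "v \<in> MY Y \<longleftrightarrow> card (nx v ` Y) \<ge> 3"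
  proof
    assume "v \<in> MY Y"
    then obtain a b c where abc: "a \<in> Y" "b \<in> Y" "c \<in> Y" "a \<noteq> b" "b \<noteq> c" "a \<noteq> c"
      "v \<in> set (tp a b)" "v \<in> set (tp b c)" "v \<in> set (tp a c)" unfolding MY_def by blast
    have abcv: "a \<in> verts T" "b \<in> verts T" "c \<in> verts T" using abc Yv by auto
    have ne: "a \<noteq> v" "b \<noteq> v" "c \<noteq> v" using abc v by auto
    have "nx v a \<noteq> nx v b" "nx v b \<noteq> nx v c" "nx v a \<noteq> nx v c"
      using sep_nx[OF vv] abcv ne abc by blast+
    then have "card {nx v a, nx v b, nx v c} = 3" by simp
    moreover have "{nx v a, nx v b, nx v c} \<subseteq> nx v ` Y" using abc by blast
    ultimately show "card (nx v ` Y) \<ge> 3" using fin card_mono by metis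
  next
    assume "card (nx v ` Y) \<ge> 3"
    then obtain x y z where xyz: "x \<in> nx v ` Y" "y \<in> nx v ` Y" "z \<in> nx v ` Y" "x \<noteq> y" "y \<noteq> z" "x \<noteq> z"
      using three_elems[OF fin] by blast
    then obtain a b c where abc: "a \<in> Y" "b \<in> Y" "c \<in> Y" "x = nx v a" "y = nx v b" "z = nx v c" by blast
    have abcv: "a \<in> verts T" "b \<in> verts T" "c \<in> verts T" using abc Yv by auto
    have ne: "a \<noteq> v" "b \<noteq> v" "c \<noteq> v" using abc v by auto
    have "v \<in> set (tp a b)" "v \<in> set (tp b c)" "v \<in> set (tp a c)"
      using sep_nx[OF vv] abcv ne abc xyz by blast+
    moreover have "a \<noteq> b" "b \<noteq> c" "a \<noteq> c" using abc xyz by auto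
    ultimately show "v \<in> MY Y" using abc unfolding MY_def by blast
  qed
qed

lemma deg_span_K:
  assumes v: "v \<in> VY Y"
  shows "degree (span T Y) v \<noteq> 2 \<longleftrightarrow> v \<in> KY Y"
proof (cases "v \<in> Y")
  case True
  have vv: "v \<in> verts T" using v VY_verts by blast
  have "{n. {v, n} \<in> EY Y} \<subseteq> {n. {v, n} \<in> edges T}" using EY_edges by blast
  then have "card {n. {v, n} \<in> EY Y} \<le> card {n. {v, n} \<in> edges T}" using nbrs_fin card_mono by blast
  also have "\<dots> \<le> 1" using deg_T deg_leaf True Y by auto
  finally show ?thesis using True deg_span KY_def by auto
next
  case False
  have "degree (span T Y) v = card (nx v ` Y)" using deg_span NS_eq[OF v False] by simp
  then show ?thesis using int_props[OF v False] False KY_def by auto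
qed

lemma restr_verts: "verts (restr T Y) = KY Y"
  unfolding restr_def Let_def verts_def using deg_span_K KY_VY
  by (auto simp: span_eq verts_def[symmetric]) (auto simp: verts_def)

end
end

lemma path_concat:
  assumes p1: "is_path G u z p1" and p2: "is_path G z w p2" and i: "set p1 \<inter> set p2 = {z}"
  shows "is_path G u w (p1 @ tl p2)"
proof -
  obtain q where q: "p2 = z # q" using p2 by (cases p2) (auto simp: is_path_def)
  obtain A where A: "p1 = A @ [z]" using p1 unfolding is_path_def by (metis append_butlast_last_id is_walk_Nil)
  show ?thesis
  proof (cases "q = []")
    case True
    then show ?thesis using p1 p2 q by (auto simp: is_path_def)
  next
    case False
    have w: "is_walk G (A @ z # q)" using walk_glue[of G A z q] p1 p2 A q by (simp add: is_path_def)
    have "distinct (A @ z # q)" using p1 p2 A q i by (auto simp: is_path_def)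
    moreover have "hd (A @ z # q) = u" using p1 A by (cases A) (auto simp: is_path_def)
    moreover have "last (A @ z # q) = w" using p2 q False by (auto simp: is_path_def)
    ultimately show ?thesis using w A q by (simp add: is_path_def)
  qed
qed

lemma pair_in_set: "P u w \<Longrightarrow> {u, w} \<in> {{u', w'} | u' w'. P u' w'}" by blast

context tree begin

lemma path_convex:
  assumes a: "a \<in> verts T" and b: "b \<in> verts T" and u: "u \<in> set (tp a b)" and w: "w \<in> set (tp a b)"
  shows "set (tp u w) \<subseteq> set (tp a b)"
proof -
  have uv: "u \<in> verts T" and wv: "w \<in> verts T" using tp_verts a b u w by blast+
  have "w \<in> set (tp a u) \<union> set (tp u b)" using tp_split_sets(1)[OF a b u] w by blast
  then show ?thesis
  proof
    assume "w \<in> set (tp u b)"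
    then show ?thesis using tp_split_sets(4)[OF uv b] tp_split_sets(5)[OF a b u] by blast
  next
    assume "w \<in> set (tp a u)"
    then have "set (tp w u) \<subseteq> set (tp a u)" using tp_split_sets(5)[OF a uv] by blast
    then show ?thesis using tp_split_sets(4)[OF a b u] tp_set_sym[OF uv wv] by blast
  qed
qed

end

context ltree begin
context fixes Y assumes Y: "Y \<subseteq> X"
begin

lemma restr_eq: "restr T Y = (KY Y, {{u, w} | u w. u \<in> KY Y \<and> w \<in> KY Y \<and> u \<noteq> w \<and>
    (\<exists>p. is_path (span T Y) u w p \<and> (\<forall>i. 0 < i \<and> Suc i < length p \<longrightarrow> degree (span T Y) (p ! i) = 2))})"
proof -
  have "{v \<in> verts (span T Y). degree (span T Y) v \<noteq> 2} = KY Y"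
    using deg_span_K[OF Y] KY_VY[OF Y] by (auto simp: span_eq[OF Y] verts_def)
  then show ?thesis unfolding restr_def Let_def by simp
qed

lemma span_path_iff:
  assumes u: "u \<in> VY Y" and w: "w \<in> VY Y"
  shows "is_path (span T Y) u w p \<longleftrightarrow> p = tp u w"
proof
  assume h: "is_path (span T Y) u w p"
  have "is_walk T p" using h VY_verts[OF Y] EY_edges[OF Y]
    unfolding is_path_def is_walk_def by (auto simp: span_eq[OF Y] verts_def edges_def)
  then have "is_path T u w p" using h by (simp add: is_path_def)
  then show "p = tp u w" using tp_eq by simp
next
  assume p: "p = tp u w"
  have uv: "u \<in> verts T" and wv: "w \<in> verts T" using u w VY_verts[OF Y] by auto
  have "set (tp u w) \<subseteq> VY Y" "list_edges (tp u w) \<subseteq> EY Y" using conv[OF Y u w] by auto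
  then have "is_walk (span T Y) (tp u w)" using tp_props(1)[OF uv wv]
    unfolding is_walk_def list_edges_def by (auto simp: span_eq[OF Y] verts_def edges_def)
  then show "is_path (span T Y) u w p" using p tp_props[OF uv wv] by (simp add: is_path_def)
qed

lemma cond_iff:
  assumes u: "u \<in> KY Y" and w: "w \<in> KY Y"
  shows "(\<exists>p. is_path (span T Y) u w p \<and> (\<forall>i. 0 < i \<and> Suc i < length p \<longrightarrow> degree (span T Y) (p ! i) = 2))
     \<longleftrightarrow> (\<forall>z\<in>KY Y. z \<in> set (tp u w) \<longrightarrow> z = u \<or> z = w)"
proof -
  have uV: "u \<in> VY Y" and wV: "w \<in> VY Y" using u w KY_VY[OF Y] by auto
  have uv: "u \<in> verts T" and wv: "w \<in> verts T" using uV wV VY_verts[OF Y] by auto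
  let ?p = "tp u w"
  have sub: "set ?p \<subseteq> VY Y" using conv[OF Y uV wV] by simp
  have d: "distinct ?p" and hd: "?p ! 0 = u" and lst: "?p ! (length ?p - 1) = w" and ne: "?p \<noteq> []"
    using tp_props[OF uv wv] by (auto simp: hd_conv_nth last_conv_nth)
  have "(\<forall>i. 0 < i \<and> Suc i < length ?p \<longrightarrow> degree (span T Y) (?p ! i) = 2)
      \<longleftrightarrow> (\<forall>z\<in>KY Y. z \<in> set ?p \<longrightarrow> z = u \<or> z = w)"
  proof
    assume A: "\<forall>i. 0 < i \<and> Suc i < length ?p \<longrightarrow> degree (span T Y) (?p ! i) = 2"
    show "\<forall>z\<in>KY Y. z \<in> set ?p \<longrightarrow> z = u \<or> z = w"
    proof (intro ballI impI)
      fix z assume zK: "z \<in> KY Y" and zp: "z \<in> set ?p"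
      then obtain i where i: "i < length ?p" "?p ! i = z" by (metis in_set_conv_nth)
      show "z = u \<or> z = w"
      proof (rule ccontr)
        assume "\<not> (z = u \<or> z = w)"
        then have "0 < i" "Suc i < length ?p" using i hd lst
          by (metis gr0I, metis Suc_lessI diff_Suc_1)
        then have "degree (span T Y) z = 2" using A i by blast
        then show False using deg_span_K[OF Y] zK sub zp by blast
      qed
    qed
  next
    assume B: "\<forall>z\<in>KY Y. z \<in> set ?p \<longrightarrow> z = u \<or> z = w"
    show "\<forall>i. 0 < i \<and> Suc i < length ?p \<longrightarrow> degree (span T Y) (?p ! i) = 2"
    proof (intro allI impI)
      fix i assume i: "0 < i \<and> Suc i < length ?p"
      have zp: "?p ! i \<in> set ?p" using i by simp
      have il: "i < length ?p" "0 < length ?p" using i by auto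
      have i0: "i \<noteq> 0" using i by simp
      have "?p ! i \<noteq> ?p ! 0" using nth_eq_iff_index_eq[OF d il(1) il(2)] i0 by simp
      then have "?p ! i \<noteq> u" using hd by simp
      moreover have jl: "length ?p - 1 < length ?p" using il by simp
      have ij: "i \<noteq> length ?p - 1" using i by linarith
      have "?p ! i \<noteq> ?p ! (length ?p - 1)" using nth_eq_iff_index_eq[OF d il(1) jl] ij by simp
      then have "?p ! i \<noteq> w" using lst by simp
      ultimately have "?p ! i \<notin> KY Y" using B zp by blast
      then show "degree (span T Y) (?p ! i) = 2" using deg_span_K[OF Y] sub zp by blast
    qed
  qed
  then show ?thesis using span_path_iff[OF uV wV] by auto
qed

definition adjK :: "'v \<Rightarrow> 'v \<Rightarrow> bool" where
  "adjK u w \<longleftrightarrow> u \<noteq> w \<and> (\<forall>z\<in>KY Y. z \<in> set (tp u w) \<longrightarrow> z = u \<or> z = w)"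

lemma adjK_sym: "u \<in> KY Y \<Longrightarrow> w \<in> KY Y \<Longrightarrow> adjK u w \<longleftrightarrow> adjK w u"
  unfolding adjK_def using tp_set_sym KY_VY[OF Y] VY_verts[OF Y] by blast

lemma restr_edges:
  assumes u: "u \<in> KY Y" and w: "w \<in> KY Y"
  shows "{u, w} \<in> edges (restr T Y) \<longleftrightarrow> adjK u w"
proof
  assume "{u, w} \<in> edges (restr T Y)"
  then obtain u' w' where uw: "{u, w} = {u', w'}" "u' \<in> KY Y" "w' \<in> KY Y" "u' \<noteq> w'"
    "\<exists>p. is_path (span T Y) u' w' p \<and> (\<forall>i. 0 < i \<and> Suc i < length p \<longrightarrow> degree (span T Y) (p ! i) = 2)"
    unfolding restr_eq edges_def by auto
  then have "\<forall>z\<in>KY Y. z \<in> set (tp u' w') \<longrightarrow> z = u' \<or> z = w'" using cond_iff[OF uw(2,3)] by blast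
  then have "adjK u' w'" unfolding adjK_def using uw by blast
  moreover have "(u = u' \<and> w = w') \<or> (u = w' \<and> w = u')" using uw(1) by (simp add: doubleton_eq_iff)
  ultimately show "adjK u w" using uw(2,3) adjK_sym by blast
next
  assume a: "adjK u w"
  have "\<exists>p. is_path (span T Y) u w p \<and> (\<forall>i. 0 < i \<and> Suc i < length p \<longrightarrow> degree (span T Y) (p ! i) = 2)"
    using cond_iff[OF u w] a unfolding adjK_def by blast
  then have "u \<in> KY Y \<and> w \<in> KY Y \<and> u \<noteq> w \<and> (\<exists>p. is_path (span T Y) u w p \<and> (\<forall>i. 0 < i \<and> Suc i < length p \<longrightarrow> degree (span T Y) (p ! i) = 2))"
    using u w a unfolding adjK_def by blast
  then show "{u, w} \<in> edges (restr T Y)"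
    unfolding restr_eq edges_def snd_conv by (rule pair_in_set)
qed

lemma PY_inj:
  assumes u: "u \<in> KY Y" and w: "w \<in> KY Y" and eq: "PY Y u = PY Y w"
  shows "u = w"
proof (cases "u \<in> Y")
  case True
  have uv: "u \<in> verts T" using True Yv[OF Y] by blast
  have "(u, u) \<in> PY Y u" unfolding PY_def using True tp_props(7)[OF uv uv] by simp
  then have "w \<in> set (tp u u)" using eq unfolding PY_def by simp
  then show ?thesis using tp_refl[OF uv] by simp
next
  case False
  then have "u \<in> MY Y" using u KY_def by blast
  then obtain a b c where abc: "a \<in> Y" "b \<in> Y" "c \<in> Y"
      "u \<in> set (tp a b)" "u \<in> set (tp b c)" "u \<in> set (tp a c)" unfolding MY_def by blast
  then have "w \<in> set (tp a b)" "w \<in> set (tp b c)" "w \<in> set (tp a c)" using eq unfolding PY_def by blast+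
  then show ?thesis using median_unique[of a b c u w] abc Yv[OF Y] by blast
qed

lemma Ext:
  assumes u: "u \<in> KY Y" and w: "w \<in> verts T" and z: "z \<in> verts T" and zn: "z \<notin> set (tp u w)"
  shows "\<exists>a\<in>Y. u \<in> set (tp a w) \<and> z \<notin> set (tp a w)"
proof (cases "u \<in> Y")
  case True
  then show ?thesis using zn tp_props(7) Yv[OF Y] w by blast
next
  case False
  then have uM: "u \<in> MY Y" using u KY_def by blast
  then obtain a b c where abc: "a \<in> Y" "b \<in> Y" "c \<in> Y" "a \<noteq> b" "b \<noteq> c" "a \<noteq> c"
      "u \<in> set (tp a b)" "u \<in> set (tp b c)" "u \<in> set (tp a c)" unfolding MY_def by blast
  have uv: "u \<in> verts T" using u KY_VY[OF Y] VY_verts[OF Y] by blast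
  have abcv: "a \<in> verts T" "b \<in> verts T" "c \<in> verts T" using abc Yv[OF Y] by auto
  have ne: "a \<noteq> u" "b \<noteq> u" "c \<noteq> u" using abc False by auto
  have d: "nx u a \<noteq> nx u b" "nx u b \<noteq> nx u c" "nx u a \<noteq> nx u c"
    using sep_nx[OF uv] abcv ne abc by blast+
  have "\<exists>r\<in>{a, b, c}. nx u r \<noteq> nx u z \<and> nx u r \<noteq> nx u w" using d by auto
  then obtain r where r: "r \<in> {a, b, c}" "nx u r \<noteq> nx u z" "nx u r \<noteq> nx u w" by blast
  have rY: "r \<in> Y" and rv: "r \<in> verts T" and rne: "r \<noteq> u" using r abc abcv ne by auto
  have zu: "z \<noteq> u" using zn tp_props(7)[OF uv w] by blast
  have urw: "u \<in> set (tp r w)"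
  proof (cases "w = u")
    case True then show ?thesis using tp_props(8)[OF rv w] by simp
  next
    case False then show ?thesis using sep_nx[OF uv rv w rne False] r by blast
  qed
  have "z \<notin> set (tp r w)"
  proof
    assume "z \<in> set (tp r w)"
    then have "z \<in> set (tp r u) \<union> set (tp u w)" using tp_split_sets(1)[OF rv w urw] by blast
    then have "z \<in> set (tp u r)" using zn tp_set_sym[OF rv uv] by blast
    then have "nx u r = nx u z" using nx_mid[OF uv rv _ zu] by blast
    then show False using r by simp
  qed
  then show ?thesis using rY urw by blast
qed

lemma Bt:
  assumes u: "u \<in> KY Y" and w: "w \<in> KY Y" and z: "z \<in> KY Y"
  shows "z \<in> set (tp u w) \<longleftrightarrow> PY Y u \<inter> PY Y w \<subseteq> PY Y z"
proof
  assume zin: "z \<in> set (tp u w)"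
  show "PY Y u \<inter> PY Y w \<subseteq> PY Y z"
  proof
    fix ab assume "ab \<in> PY Y u \<inter> PY Y w"
    then obtain a b where ab: "ab = (a, b)" "a \<in> Y" "b \<in> Y" "u \<in> set (tp a b)" "w \<in> set (tp a b)"
      unfolding PY_def by auto
    have "z \<in> set (tp a b)" using path_convex[of a b u w] ab Yv[OF Y] zin by blast
    then show "ab \<in> PY Y z" using ab unfolding PY_def by auto
  qed
next
  assume sub: "PY Y u \<inter> PY Y w \<subseteq> PY Y z"
  show "z \<in> set (tp u w)"
  proof (rule ccontr)
    assume zn: "z \<notin> set (tp u w)"
    have uv: "u \<in> verts T" and wv: "w \<in> verts T" and zv: "z \<in> verts T"
      using u w z KY_VY[OF Y] VY_verts[OF Y] by blast+
    obtain a where a: "a \<in> Y" "u \<in> set (tp a w)" "z \<notin> set (tp a w)" using Ext[OF u wv zv zn] by blast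
    have av: "a \<in> verts T" using a Yv[OF Y] by blast
    have "z \<notin> set (tp w a)" using a tp_set_sym[OF av wv] by blast
    then obtain b where b: "b \<in> Y" "w \<in> set (tp b a)" "z \<notin> set (tp b a)" using Ext[OF w av zv] by blast
    have bv: "b \<in> verts T" using b Yv[OF Y] by blast
    have wab: "w \<in> set (tp a b)" "z \<notin> set (tp a b)" using b tp_set_sym[OF av bv] by blast+
    have uab: "u \<in> set (tp a b)" using tp_split_sets(4)[OF av bv wab(1)] a by blast
    have "(a, b) \<in> PY Y u \<inter> PY Y w" using a b wab uab unfolding PY_def by auto
    then have "(a, b) \<in> PY Y z" using sub by blast
    then show False using wab unfolding PY_def by auto
  qed
qed

end
end

lemma iso_sym:
  assumes iso: "iso_fixing Y G H" and Yv: "Y \<subseteq> verts G"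
  shows "iso_fixing Y H G"
proof -
  obtain f where f: "bij_betw f (verts G) (verts H)" "\<forall>y\<in>Y. f y = y"
    "\<forall>u\<in>verts G. \<forall>v\<in>verts G. {u, v} \<in> edges G \<longleftrightarrow> {f u, f v} \<in> edges H"
    using iso unfolding iso_fixing_def by (elim exE conjE)
  define g where "g = inv_into (verts G) f"
  have g: "bij_betw g (verts H) (verts G)" unfolding g_def by (rule bij_betw_inv_into[OF f(1)])
  have gf: "\<And>x. x \<in> verts H \<Longrightarrow> f (g x) = x" using f(1) g_def
    by (simp add: bij_betw_inv_into_right)
  have gv: "\<And>x. x \<in> verts H \<Longrightarrow> g x \<in> verts G" using g by (rule bij_betw_apply)
  have "\<forall>y\<in>Y. g y = y"
  proof
    fix y assume y: "y \<in> Y"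
    have "y \<in> verts G" using y Yv by blast
    then have "g (f y) = y" unfolding g_def by (rule bij_betw_inv_into_left[OF f(1)])
    then show "g y = y" using f(2) y by simp
  qed
  moreover have "\<forall>u\<in>verts H. \<forall>v\<in>verts H. {u, v} \<in> edges H \<longleftrightarrow> {g u, g v} \<in> edges G"
  proof (intro ballI)
    fix u v assume u: "u \<in> verts H" and v: "v \<in> verts H"
    have "{g u, g v} \<in> edges G \<longleftrightarrow> {f (g u), f (g v)} \<in> edges H" using f(3) gv[OF u] gv[OF v] by simp
    then show "{u, v} \<in> edges H \<longleftrightarrow> {g u, g v} \<in> edges G" using gf[OF u] gf[OF v] by simp
  qed
  ultimately show ?thesis using g unfolding iso_fixing_def by (intro exI[of _ g] conjI)
qed

lemma iso_path:
  assumes f: "bij_betw f (verts G) (verts H)"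
    "\<forall>u\<in>verts G. \<forall>v\<in>verts G. {u, v} \<in> edges G \<longleftrightarrow> {f u, f v} \<in> edges H"
    and p: "is_path G a b p"
  shows "is_path H (f a) (f b) (map f p)"
proof -
  have sp: "set p \<subseteq> verts G" using p by (simp add: is_path_def is_walk_def)
  have "is_walk H (map f p)"
    unfolding is_walk_def
  proof (intro conjI allI impI)
    show "map f p \<noteq> []" using p by (simp add: is_path_def is_walk_def)
    show "set (map f p) \<subseteq> verts H" using sp f(1) bij_betw_apply by fastforce
    fix i assume i: "Suc i < length (map f p)"
    have "{p ! i, p ! Suc i} \<in> edges G" using p i by (simp add: is_path_def is_walk_def)
    moreover have "p ! i \<in> verts G" "p ! Suc i \<in> verts G" using sp i by auto
    ultimately show "{map f p ! i, map f p ! Suc i} \<in> edges H" using f(2) i by auto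
  qed
  moreover have "distinct (map f p)"
  proof -
    have "inj_on f (set p)" using inj_on_subset[OF bij_betw_imp_inj_on[OF f(1)] sp] .
    then show ?thesis using p by (simp add: is_path_def distinct_map)
  qed
  moreover have "p \<noteq> []" using p by (simp add: is_path_def is_walk_def)
  then have "hd (map f p) = f a" "last (map f p) = f b" using p
    by (auto simp: is_path_def hd_map last_map)
  ultimately show ?thesis by (simp add: is_path_def)
qed

lemma iso_sep:
  assumes f: "bij_betw f (verts G) (verts H)" "\<forall>y\<in>Y. f y = y"
    "\<forall>u\<in>verts G. \<forall>v\<in>verts G. {u, v} \<in> edges G \<longleftrightarrow> {f u, f v} \<in> edges H"
    and Yv: "Y \<subseteq> verts G" and a: "a \<in> Y" and b: "b \<in> Y"
    and v: "v \<in> verts G" and sep: "\<forall>p. is_path G a b p \<longrightarrow> v \<in> set p"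
  shows "\<forall>p. is_path H a b p \<longrightarrow> f v \<in> set p"
proof (intro allI impI)
  define g where "g = inv_into (verts G) f"
  have g: "bij_betw g (verts H) (verts G)" unfolding g_def by (rule bij_betw_inv_into[OF f(1)])
  have gf: "\<And>x. x \<in> verts H \<Longrightarrow> f (g x) = x" using f(1) g_def
    by (simp add: bij_betw_inv_into_right)
  have gv: "\<And>x. x \<in> verts H \<Longrightarrow> g x \<in> verts G" using g by (rule bij_betw_apply)
  have gY: "\<forall>y\<in>Y. g y = y"
  proof
    fix y assume y: "y \<in> Y"
    have "y \<in> verts G" using y Yv by blast
    then have "g (f y) = y" unfolding g_def by (rule bij_betw_inv_into_left[OF f(1)])
    then show "g y = y" using f(2) y by simp
  qed
  have ge: "\<forall>u\<in>verts H. \<forall>v\<in>verts H. {u, v} \<in> edges H \<longleftrightarrow> {g u, g v} \<in> edges G"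
  proof (intro ballI)
    fix u v assume u: "u \<in> verts H" and v: "v \<in> verts H"
    have "{g u, g v} \<in> edges G \<longleftrightarrow> {f (g u), f (g v)} \<in> edges H" using f(3) gv[OF u] gv[OF v] by simp
    then show "{u, v} \<in> edges H \<longleftrightarrow> {g u, g v} \<in> edges G" using gf[OF u] gf[OF v] by simp
  qed
  fix p assume p: "is_path H a b p"
  have "is_path G (g a) (g b) (map g p)" using iso_path[OF g ge p] .
  then have "is_path G a b (map g p)" using gY a b by simp
  then have "v \<in> set (map g p)" using sep by blast
  then obtain x where x: "x \<in> set p" "v = g x" by auto
  have xv: "x \<in> verts H" using x p by (auto simp: is_path_def is_walk_def)
  then show "f v \<in> set p" using x gf by simp
qed

context ltree begin
context fixes Y assumes Y: "Y \<subseteq> X"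
begin

lemma RP:
  assumes "u \<in> KY Y" "w \<in> KY Y"
  shows "\<exists>p. is_path (restr T Y) u w p \<and> set p = KY Y \<inter> set (tp u w)"
  using assms
proof (induction "card (KY Y \<inter> set (tp u w))" arbitrary: u w rule: less_induct)
  case less
  have u: "u \<in> KY Y" and w: "w \<in> KY Y" using less.prems by auto
  have uv: "u \<in> verts T" and wv: "w \<in> verts T" using u w KY_VY[OF Y] VY_verts[OF Y] by blast+
  have Kv: "verts (restr T Y) = KY Y" using restr_verts[OF Y] .
  show ?case
  proof (cases "u = w")
    case True
    then have "is_path (restr T Y) u w [u]" using u Kv by (simp add: is_path_def)
    moreover have "set [u] = KY Y \<inter> set (tp u w)" using True tp_refl[OF uv] u by simp
    ultimately show ?thesis by blast
  next
    case False
    show ?thesis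
    proof (cases "\<forall>z\<in>KY Y. z \<in> set (tp u w) \<longrightarrow> z = u \<or> z = w")
      case True
      then have "adjK Y u w" using False unfolding adjK_def[OF Y] by blast
      then have e: "{u, w} \<in> edges (restr T Y)" using restr_edges[OF Y u w] by blast
      have "is_path (restr T Y) u w [u, w]" using e u w Kv False by (simp add: is_path_def is_walk_Cons2)
      moreover have "set [u, w] = KY Y \<inter> set (tp u w)" using True u w tp_props(7,8)[OF uv wv] by auto
      ultimately show ?thesis by blast
    next
      case False2: False
      then obtain z where z: "z \<in> KY Y" "z \<in> set (tp u w)" "z \<noteq> u" "z \<noteq> w" by blast
      have zv: "z \<in> verts T" using z tp_verts uv wv by blast
      have fin: "finite (KY Y \<inter> set (tp u w))" by simp
      have s1: "KY Y \<inter> set (tp u z) \<subset> KY Y \<inter> set (tp u w)"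
      proof -
        have "w \<notin> set (tp u z)" using tp_split_sets(2)[OF uv wv z(2)] tp_props(8)[OF zv wv] z(4) by (metis IntI singletonD)
        then show ?thesis using tp_split_sets(4)[OF uv wv z(2)] w tp_props(8)[OF uv wv] by blast
      qed
      have s2: "KY Y \<inter> set (tp z w) \<subset> KY Y \<inter> set (tp u w)"
      proof -
        have "u \<notin> set (tp z w)" using tp_split_sets(2)[OF uv wv z(2)] tp_props(7)[OF uv zv] z(3) by (metis IntI singletonD)
        then show ?thesis using tp_split_sets(5)[OF uv wv z(2)] u tp_props(7)[OF uv wv] by blast
      qed
      obtain p1 where p1: "is_path (restr T Y) u z p1" "set p1 = KY Y \<inter> set (tp u z)"
        using less.hyps[OF psubset_card_mono[OF fin s1] u z(1)] by blast
      obtain p2 where p2: "is_path (restr T Y) z w p2" "set p2 = KY Y \<inter> set (tp z w)"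
        using less.hyps[OF psubset_card_mono[OF fin s2] z(1) w] by blast
      have "set p1 \<inter> set p2 = {z}" using p1(2) p2(2) tp_split_sets(2)[OF uv wv z(2)] z(1) by blast
      then have "is_path (restr T Y) u w (p1 @ tl p2)" using path_concat[OF p1(1) p2(1)] by blast
      moreover have "set (p1 @ tl p2) = KY Y \<inter> set (tp u w)"
      proof -
        obtain q where q: "p2 = z # q" using p2(1) by (cases p2) (auto simp: is_path_def)
        have "set (p1 @ tl p2) = set p1 \<union> set p2" using q p1(2) tp_props(8)[OF uv zv] z(1) by auto
        then show ?thesis using p1(2) p2(2) tp_split_sets(1)[OF uv wv z(2)] by blast
      qed
      ultimately show ?thesis by blast
    qed
  qed
qed

lemma walk_cover: "is_walk (restr T Y) p \<Longrightarrow> KY Y \<inter> set (tp (hd p) (last p)) \<subseteq> set p"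
proof (induction p)
  case Nil then show ?case by simp
next
  case (Cons x p)
  have Kv: "verts (restr T Y) = KY Y" using restr_verts[OF Y] .
  have xK: "x \<in> KY Y" using Cons.prems Kv by (auto simp: is_walk_def)
  have xv: "x \<in> verts T" using xK KY_VY[OF Y] VY_verts[OF Y] by blast
  show ?case
  proof (cases p)
    case Nil then show ?thesis using tp_refl[OF xv] by simp
  next
    case (Cons y r)
    have e: "{x, y} \<in> edges (restr T Y)" and wr: "is_walk (restr T Y) (y # r)"
      using Cons.prems Cons by (auto simp: is_walk_Cons2)
    have yK: "y \<in> KY Y" using wr Kv by (auto simp: is_walk_def)
    have yv: "y \<in> verts T" using yK KY_VY[OF Y] VY_verts[OF Y] by blast
    have lK: "last (y # r) \<in> KY Y" using wr Kv by (auto simp: is_walk_def)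
    have lv: "last (y # r) \<in> verts T" using lK KY_VY[OF Y] VY_verts[OF Y] by blast
    have IH: "KY Y \<inter> set (tp y (last (y # r))) \<subseteq> set (y # r)" using Cons.IH wr Cons by simp
    have "adjK Y x y" using restr_edges[OF Y xK yK] e by blast
    then have A: "KY Y \<inter> set (tp x y) \<subseteq> {x, y}" unfolding adjK_def[OF Y] by blast
    have "set (tp x (last (y # r))) \<subseteq> set (tp x y) \<union> set (tp y (last (y # r)))"
      using triangle(1)[OF xv yv lv] .
    then show ?thesis using A IH Cons by auto
  qed
qed

lemma sep:
  assumes v: "v \<in> KY Y" and a: "a \<in> Y" and b: "b \<in> Y"
  shows "v \<in> set (tp a b) \<longleftrightarrow> (\<forall>p. is_path (restr T Y) a b p \<longrightarrow> v \<in> set p)"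
proof
  assume vin: "v \<in> set (tp a b)"
  show "\<forall>p. is_path (restr T Y) a b p \<longrightarrow> v \<in> set p"
  proof (intro allI impI)
    fix p assume "is_path (restr T Y) a b p"
    then show "v \<in> set p" using walk_cover[of p] vin v by (auto simp: is_path_def)
  qed
next
  assume h: "\<forall>p. is_path (restr T Y) a b p \<longrightarrow> v \<in> set p"
  have "a \<in> KY Y" "b \<in> KY Y" using a b KY_def by auto
  then obtain p where "is_path (restr T Y) a b p" "set p = KY Y \<inter> set (tp a b)" using RP by blast
  then show "v \<in> set (tp a b)" using h by blast
qed

lemma median_K:
  assumes a: "a \<in> Y" and b: "b \<in> Y" and c: "c \<in> Y"
    and m: "m \<in> set (tp a b)" "m \<in> set (tp b c)" "m \<in> set (tp a c)"
  shows "m \<in> KY Y"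
proof -
  have av: "a \<in> verts T" and bv: "b \<in> verts T" and cv: "c \<in> verts T" using a b c Yv[OF Y] by auto
  show ?thesis
  proof (cases "a = b \<or> b = c \<or> a = c")
    case True
    then have "m = a \<or> m = b" using m tp_refl av bv cv by auto
    then show ?thesis using a b KY_def by auto
  next
    case False
    then have "m \<in> MY Y" unfolding MY_def using a b c m by blast
    then show ?thesis using KY_def by auto
  qed
qed

lemma qchar:
  assumes a: "a \<in> Y" and b: "b \<in> Y" and c: "c \<in> Y" and d: "d \<in> Y"
  shows "set (tp a b) \<inter> set (tp c d) = {} \<longleftrightarrow> \<not> (\<exists>v\<in>KY Y. v \<in> set (tp a b) \<and> v \<in> set (tp c d))"
proof
  assume "set (tp a b) \<inter> set (tp c d) = {}"
  then show "\<not> (\<exists>v\<in>KY Y. v \<in> set (tp a b) \<and> v \<in> set (tp c d))" by blast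
next
  assume h: "\<not> (\<exists>v\<in>KY Y. v \<in> set (tp a b) \<and> v \<in> set (tp c d))"
  show "set (tp a b) \<inter> set (tp c d) = {}"
  proof (rule ccontr)
    assume "set (tp a b) \<inter> set (tp c d) \<noteq> {}"
    then obtain x where x: "x \<in> set (tp a b)" "x \<in> set (tp c d)" by blast
    have av: "a \<in> verts T" and bv: "b \<in> verts T" and cv: "c \<in> verts T" and dv: "d \<in> verts T"
      using a b c d Yv[OF Y] by auto
    obtain m where m: "m \<in> set (tp a b)" "m \<in> set (tp b c)" "m \<in> set (tp a c)"
      using median_exists[OF av bv cv] by blast
    have "m \<in> set (tp c d)" using gate[OF av bv cv dv m x] .
    moreover have "m \<in> KY Y" using median_K[OF a b c m] .
    ultimately show False using h m by blast
  qed
qed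

lemma KY_Y: "Y \<subseteq> KY Y" unfolding KY_def by blast

end
end

lemma iso_qd_aux:
  assumes T1: "ltree T X" and T2: "ltree T' X'" and Y: "Y \<subseteq> X" "Y \<subseteq> X'"
    and iso: "iso_fixing Y (restr T Y) (restr T' Y)"
    and abcd: "a \<in> Y" "b \<in> Y" "c \<in> Y" "d \<in> Y"
    and nq: "set (tree.tp T a b) \<inter> set (tree.tp T c d) \<noteq> {}"
  shows "set (tree.tp T' a b) \<inter> set (tree.tp T' c d) \<noteq> {}"
proof -
  interpret A: ltree T X by (rule T1)
  interpret B: ltree T' X' by (rule T2)
  have "\<exists>v\<in>A.KY Y. v \<in> set (A.tp a b) \<and> v \<in> set (A.tp c d)"
    using A.qchar[OF Y(1) abcd] nq by argo
  then obtain v where v: "v \<in> A.KY Y" "v \<in> set (A.tp a b)" "v \<in> set (A.tp c d)" by (elim bexE conjE)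
  have YG: "Y \<subseteq> verts (restr T Y)" using A.restr_verts[OF Y(1)] A.KY_Y[OF Y(1)] by simp
  have vG: "v \<in> verts (restr T Y)" using A.restr_verts[OF Y(1)] v by blast
  obtain f where f: "bij_betw f (verts (restr T Y)) (verts (restr T' Y))" "\<forall>y\<in>Y. f y = y"
    "\<forall>u\<in>verts (restr T Y). \<forall>v\<in>verts (restr T Y). {u, v} \<in> edges (restr T Y) \<longleftrightarrow> {f u, f v} \<in> edges (restr T' Y)"
    using iso unfolding iso_fixing_def by (elim exE conjE)
  have s1: "\<forall>p. is_path (restr T Y) a b p \<longrightarrow> v \<in> set p" using iffD1[OF A.sep[OF Y(1) v(1) abcd(1,2)] v(2)] .
  have s2: "\<forall>p. is_path (restr T Y) c d p \<longrightarrow> v \<in> set p" using iffD1[OF A.sep[OF Y(1) v(1) abcd(3,4)] v(3)] .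
  have fv: "f v \<in> B.KY Y" using bij_betw_apply[OF f(1) vG] B.restr_verts[OF Y(2)] by simp
  have key: "\<And>a b. a \<in> Y \<Longrightarrow> b \<in> Y \<Longrightarrow> \<forall>p. is_path (restr T Y) a b p \<longrightarrow> v \<in> set p \<Longrightarrow>
      \<forall>p. is_path (restr T' Y) a b p \<longrightarrow> f v \<in> set p"
    using iso_sep[OF f YG _ _ vG] by blast
  have "f v \<in> set (B.tp a b)" using iffD2[OF B.sep[OF Y(2) fv abcd(1,2)] key[OF abcd(1,2) s1]] .
  moreover have "f v \<in> set (B.tp c d)" using iffD2[OF B.sep[OF Y(2) fv abcd(3,4)] key[OF abcd(3,4) s2]] .
  ultimately show ?thesis by blast
qed

definition smT :: "'v graph \<Rightarrow> 'v \<Rightarrow> 'v \<Rightarrow> 'v \<Rightarrow> 'v \<Rightarrow> bool" where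
  "smT T z r s t \<longleftrightarrow> z = r \<or> set (tree.tp T z r) \<inter> set (tree.tp T s t) = {}"

definition clsT :: "'v graph \<Rightarrow> 'v \<Rightarrow> 'v \<Rightarrow> 'v \<Rightarrow> 'v \<Rightarrow> 'v \<Rightarrow> bool" where
  "clsT T a b c x y \<longleftrightarrow> (smT T x a b c \<and> smT T y a b c) \<or> (smT T x b a c \<and> smT T y b a c)
      \<or> (smT T x c a b \<and> smT T y c a b)"

context tree begin

lemma L_aux:
  assumes a: "a \<in> verts T" and b: "b \<in> verts T" and x: "x \<in> verts T" and v: "v \<in> verts T"
    and vab: "v \<in> set (tp a b)" and vax: "v \<notin> set (tp a x)"
    and yax: "y \<in> set (tp a x)" and ybv: "y \<in> set (tp b v)" and yv: "y \<noteq> v"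
  shows False
proof -
  have yV: "y \<in> verts T" using yax a x tp_verts by blast
  have 1: "v \<notin> set (tp a y)" using tp_split_sets(4)[OF a x yax] vax by blast
  have 2: "v \<notin> set (tp y b)"
  proof
    assume "v \<in> set (tp y b)"
    then have "v \<in> set (tp b y)" using tp_set_sym[OF yV b] by simp
    moreover have "v \<in> set (tp y v)" using tp_props(8)[OF yV v] .
    ultimately show False using tp_split_sets(2)[OF b v ybv] yv by (metis IntI singletonD)
  qed
  have "set (tp a b) \<subseteq> set (tp a y) \<union> set (tp y b)" using triangle(1)[OF a yV b] .
  then show False using 1 2 vab by blast
qed

lemma L_disj:
  assumes a: "a \<in> verts T" and b: "b \<in> verts T" and c: "c \<in> verts T" and x: "x \<in> verts T"
    and v: "v \<in> set (tp a b)" "v \<in> set (tp a c)" "v \<in> set (tp b c)" and vax: "v \<notin> set (tp a x)"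
  shows "set (tp x a) \<inter> set (tp b c) = {}"
proof (rule ccontr)
  assume "set (tp x a) \<inter> set (tp b c) \<noteq> {}"
  then obtain y where y: "y \<in> set (tp x a)" "y \<in> set (tp b c)" by blast
  have vV: "v \<in> verts T" using v a b tp_verts by blast
  have yax: "y \<in> set (tp a x)" using y tp_set_sym[OF a x] by simp
  have yv: "y \<noteq> v" using yax vax by blast
  have "y \<in> set (tp b v) \<union> set (tp v c)" using tp_split_sets(1)[OF b c v(3)] y(2) by blast
  then show False
  proof
    assume "y \<in> set (tp b v)"
    then show False using L_aux[OF a b x vV v(1) vax yax _ yv] by blast
  next
    assume "y \<in> set (tp v c)"
    then have "y \<in> set (tp c v)" using tp_set_sym[OF vV c] by simp
    then show False using L_aux[OF a c x vV v(2) vax yax _ yv] by blast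
  qed
qed

end

context ltree begin
context fixes Y assumes Y: "Y \<subseteq> X"
begin

lemma sm_iff:
  assumes vM: "v \<in> VY Y" "v \<notin> Y" and r: "r \<in> Y" and s: "s \<in> Y" and t: "t \<in> Y" and z: "z \<in> Y"
    and v: "v \<in> set (tp r s)" "v \<in> set (tp r t)" "v \<in> set (tp s t)"
  shows "smT T z r s t \<longleftrightarrow> nx v z = nx v r"
proof -
  have vv: "v \<in> verts T" using vM VY_verts[OF Y] by blast
  have rv: "r \<in> verts T" and sv: "s \<in> verts T" and tv: "t \<in> verts T" and zv: "z \<in> verts T"
    using r s t z Yv[OF Y] by auto
  have zn: "z \<noteq> v" and rn: "r \<noteq> v" using z r vM by auto
  show ?thesis
  proof
    assume "smT T z r s t"
    then have "z = r \<or> set (tp z r) \<inter> set (tp s t) = {}" unfolding smT_def .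
    then show "nx v z = nx v r"
    proof
      assume "set (tp z r) \<inter> set (tp s t) = {}"
      then have "v \<notin> set (tp z r)" using v(3) by blast
      then show ?thesis using sep_nx[OF vv zv rv zn rn] by blast
    qed simp
  next
    assume eq: "nx v z = nx v r"
    show "smT T z r s t"
    proof (cases "z = r")
      case False
      have "v \<notin> set (tp z r)" using sep_nx[OF vv zv rv zn rn] eq by blast
      then have "v \<notin> set (tp r z)" using tp_set_sym[OF zv rv] by simp
      then have "set (tp z r) \<inter> set (tp s t) = {}" using L_disj[OF rv sv tv zv v(1,2,3)] by blast
      then show ?thesis unfolding smT_def by blast
    qed (simp add: smT_def)
  qed
qed

lemma cls:
  assumes abc: "a \<in> Y" "b \<in> Y" "c \<in> Y" "a \<noteq> b" "b \<noteq> c" "a \<noteq> c"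
    and v: "v \<in> set (tp a b)" "v \<in> set (tp b c)" "v \<in> set (tp a c)"
    and x: "x \<in> Y" and y: "y \<in> Y"
  shows "v \<in> set (tp x y) \<longleftrightarrow> \<not> clsT T a b c x y"
proof -
  have vM: "v \<in> MY Y" unfolding MY_def using abc v by blast
  have vY: "v \<notin> Y" using vM MY_Y[OF Y] by blast
  have vV: "v \<in> VY Y" using vM MY_VY[OF Y] by blast
  have vv: "v \<in> verts T" using vV VY_verts[OF Y] by blast
  have abcv: "a \<in> verts T" "b \<in> verts T" "c \<in> verts T" "x \<in> verts T" "y \<in> verts T"
    using abc x y Yv[OF Y] by auto
  have ne: "a \<noteq> v" "b \<noteq> v" "c \<noteq> v" "x \<noteq> v" "y \<noteq> v" using abc x y vY by auto
  have vba: "v \<in> set (tp b a)" using v tp_set_sym[OF abcv(1,2)] by simp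
  have vcb: "v \<in> set (tp c b)" using v tp_set_sym[OF abcv(2,3)] by simp
  have vca: "v \<in> set (tp c a)" using v tp_set_sym[OF abcv(1,3)] by simp
  have d: "nx v a \<noteq> nx v b" "nx v b \<noteq> nx v c" "nx v a \<noteq> nx v c"
    using sep_nx[OF vv] abcv ne v by blast+
  have fin: "finite (nx v ` Y)"
  proof -
    have "nx v ` Y \<subseteq> verts T" using nx_props(3)[OF vv] Yv[OF Y] vY by blast
    then show ?thesis using fin_verts finite_subset by blast
  qed
  have sub: "{nx v a, nx v b, nx v c} \<subseteq> nx v ` Y" using abc by blast
  have c3: "card {nx v a, nx v b, nx v c} = 3" using d by simp
  have "card (nx v ` Y) \<le> 3" using int_props(2)[OF Y vV vY] .
  then have eq3: "nx v ` Y = {nx v a, nx v b, nx v c}"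
    using card_subset_eq[OF fin sub] c3 by (metis card_mono fin le_antisym sub)
  have nxx: "nx v x \<in> {nx v a, nx v b, nx v c}" using eq3 x by blast
  have nxy: "nx v y \<in> {nx v a, nx v b, nx v c}" using eq3 y by blast
  have sa: "\<And>z. z \<in> Y \<Longrightarrow> smT T z a b c \<longleftrightarrow> nx v z = nx v a"
    using sm_iff[OF vV vY abc(1,2,3) _ v(1) v(3) v(2)] by blast
  have sb: "\<And>z. z \<in> Y \<Longrightarrow> smT T z b a c \<longleftrightarrow> nx v z = nx v b"
    using sm_iff[OF vV vY abc(2,1,3) _ vba v(2) v(3)] by blast
  have sc: "\<And>z. z \<in> Y \<Longrightarrow> smT T z c a b \<longleftrightarrow> nx v z = nx v c"
    using sm_iff[OF vV vY abc(3,1,2) _ vca vcb v(1)] by blast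
  have "clsT T a b c x y \<longleftrightarrow> nx v x = nx v y"
    unfolding clsT_def using sa[OF x] sa[OF y] sb[OF x] sb[OF y] sc[OF x] sc[OF y] nxx nxy by auto
  moreover have "v \<in> set (tp x y) \<longleftrightarrow> nx v x \<noteq> nx v y" using sep_nx[OF vv abcv(4,5) ne(4,5)] .
  ultimately show ?thesis by simp
qed

lemma PY_leaf:
  assumes y: "y \<in> Y"
  shows "PY Y y = {(a, b). a \<in> Y \<and> b \<in> Y \<and> (y = a \<or> y = b)}"
proof -
  have yX: "y \<in> X" using y Y by blast
  { fix a b assume ab: "a \<in> Y" "b \<in> Y"
    have av: "a \<in> verts T" and bv: "b \<in> verts T" using ab Yv[OF Y] by auto
    have "y \<in> set (tp a b) \<longleftrightarrow> y = a \<or> y = b"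
      using leaf_path[OF yX av bv] tp_props(7,8)[OF av bv] by blast }
  then show ?thesis unfolding PY_def by auto
qed

lemma adjK_PY:
  assumes u: "u \<in> KY Y" and w: "w \<in> KY Y"
  shows "adjK Y u w \<longleftrightarrow> u \<noteq> w \<and> (\<forall>z\<in>KY Y. PY Y u \<inter> PY Y w \<subseteq> PY Y z \<longrightarrow> z = u \<or> z = w)"
proof -
  have "\<And>z. z \<in> KY Y \<Longrightarrow> z \<in> set (tp u w) \<longleftrightarrow> PY Y u \<inter> PY Y w \<subseteq> PY Y z" using Bt[OF Y u w] by simp
  then show ?thesis unfolding adjK_def[OF Y] by auto
qed

end
end

lemma match:
  assumes T1: "ltree T X" and T2: "ltree T' X'" and Y: "Y \<subseteq> X" "Y \<subseteq> X'"
    and QA: "\<And>a b c d. a \<in> Y \<Longrightarrow> b \<in> Y \<Longrightarrow> c \<in> Y \<Longrightarrow> d \<in> Y \<Longrightarrow>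
      (set (tree.tp T a b) \<inter> set (tree.tp T c d) = {}) \<longleftrightarrow> (set (tree.tp T' a b) \<inter> set (tree.tp T' c d) = {})"
    and v: "v \<in> ltree.KY T Y"
  shows "\<exists>w\<in>ltree.KY T' Y. ltree.PY T' Y w = ltree.PY T Y v"
proof -
  interpret A: ltree T X by (rule T1)
  interpret B: ltree T' X' by (rule T2)
  show ?thesis
  proof (cases "v \<in> Y")
    case True
    have "B.PY Y v = A.PY Y v" using A.PY_leaf[OF Y(1) True] B.PY_leaf[OF Y(2) True] by simp
    then show ?thesis using True B.KY_Y[OF Y(2)] by blast
  next
    case False
    then have "v \<in> A.MY Y" using v A.KY_def by blast
    then obtain a b c where abc: "a \<in> Y" "b \<in> Y" "c \<in> Y" "a \<noteq> b" "b \<noteq> c" "a \<noteq> c"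
      "v \<in> set (A.tp a b)" "v \<in> set (A.tp b c)" "v \<in> set (A.tp a c)" unfolding A.MY_def by blast
    have abcv: "a \<in> verts T'" "b \<in> verts T'" "c \<in> verts T'" using abc B.Yv[OF Y(2)] by auto
    obtain w where w: "w \<in> set (B.tp a b)" "w \<in> set (B.tp b c)" "w \<in> set (B.tp a c)"
      using B.median_exists[OF abcv] by blast
    have wM: "w \<in> B.MY Y" unfolding B.MY_def using abc w by blast
    then have wK: "w \<in> B.KY Y" using B.KY_def by blast
    have eqc: "\<And>x y. x \<in> Y \<Longrightarrow> y \<in> Y \<Longrightarrow> clsT T a b c x y \<longleftrightarrow> clsT T' a b c x y"
      unfolding clsT_def smT_def using QA abc(1-3) by simp
    have "\<And>x y. x \<in> Y \<Longrightarrow> y \<in> Y \<Longrightarrow> w \<in> set (B.tp x y) \<longleftrightarrow> v \<in> set (A.tp x y)"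
      using A.cls[OF Y(1) abc(1-9)] B.cls[OF Y(2) abc(1-6) w(1,2,3)] eqc by simp
    then have "B.PY Y w = A.PY Y v" unfolding A.PY_def B.PY_def by auto
    then show ?thesis using wK by blast
  qed
qed

theorem recon:
  assumes T1: "ltree T X" and T2: "ltree T' X'" and Y: "Y \<subseteq> X" "Y \<subseteq> X'"
    and QA: "\<And>a b c d. a \<in> Y \<Longrightarrow> b \<in> Y \<Longrightarrow> c \<in> Y \<Longrightarrow> d \<in> Y \<Longrightarrow>
      (set (tree.tp T a b) \<inter> set (tree.tp T c d) = {}) \<longleftrightarrow> (set (tree.tp T' a b) \<inter> set (tree.tp T' c d) = {})"
  shows "iso_fixing Y (restr T Y) (restr T' Y)"
proof -
  interpret A: ltree T X by (rule T1)
  interpret B: ltree T' X' by (rule T2)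
  have QA': "\<And>a b c d. a \<in> Y \<Longrightarrow> b \<in> Y \<Longrightarrow> c \<in> Y \<Longrightarrow> d \<in> Y \<Longrightarrow>
      (set (B.tp a b) \<inter> set (B.tp c d) = {}) \<longleftrightarrow> (set (A.tp a b) \<inter> set (A.tp c d) = {})"
    using QA by simp
  define f where "f v = (SOME w. w \<in> B.KY Y \<and> B.PY Y w = A.PY Y v)" for v
  have fK: "\<And>v. v \<in> A.KY Y \<Longrightarrow> f v \<in> B.KY Y \<and> B.PY Y (f v) = A.PY Y v"
  proof -
    fix v assume v: "v \<in> A.KY Y"
    have "\<exists>w. w \<in> B.KY Y \<and> B.PY Y w = A.PY Y v" using match[OF T1 T2 Y QA v] by blast
    then show "f v \<in> B.KY Y \<and> B.PY Y (f v) = A.PY Y v" unfolding f_def by (rule someI_ex)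
  qed
  have inj: "inj_on f (A.KY Y)"
  proof (rule inj_onI)
    fix u v assume u: "u \<in> A.KY Y" and v: "v \<in> A.KY Y" and e: "f u = f v"
    then have "A.PY Y u = A.PY Y v" using fK[OF u] fK[OF v] by simp
    then show "u = v" using A.PY_inj[OF Y(1) u v] by simp
  qed
  have img: "f ` A.KY Y = B.KY Y"
  proof
    show "f ` A.KY Y \<subseteq> B.KY Y" using fK by auto
    show "B.KY Y \<subseteq> f ` A.KY Y"
    proof
      fix w assume w: "w \<in> B.KY Y"
      obtain v where v: "v \<in> A.KY Y" "A.PY Y v = B.PY Y w" using match[OF T2 T1 Y(2) Y(1) QA' w] by blast
      have "B.PY Y (f v) = B.PY Y w" using fK[OF v(1)] v(2) by simp
      then have "f v = w" using B.PY_inj[OF Y(2) _ w] fK[OF v(1)] by simp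
      then show "w \<in> f ` A.KY Y" using v(1) by blast
    qed
  qed
  have bij: "bij_betw f (verts (restr T Y)) (verts (restr T' Y))"
    using inj img A.restr_verts[OF Y(1)] B.restr_verts[OF Y(2)] by (simp add: bij_betw_def)
  have fixY: "\<forall>y\<in>Y. f y = y"
  proof
    fix y assume y: "y \<in> Y"
    have yA: "y \<in> A.KY Y" and yB: "y \<in> B.KY Y" using y A.KY_Y[OF Y(1)] B.KY_Y[OF Y(2)] by auto
    have "B.PY Y (f y) = B.PY Y y" using fK[OF yA] A.PY_leaf[OF Y(1) y] B.PY_leaf[OF Y(2) y] by simp
    then show "f y = y" using B.PY_inj[OF Y(2) _ yB] fK[OF yA] by simp
  qed
  have edg: "\<forall>u\<in>verts (restr T Y). \<forall>v\<in>verts (restr T Y).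
      {u, v} \<in> edges (restr T Y) \<longleftrightarrow> {f u, f v} \<in> edges (restr T' Y)"
  proof (intro ballI)
    fix u v assume u0: "u \<in> verts (restr T Y)" and v0: "v \<in> verts (restr T Y)"
    have u: "u \<in> A.KY Y" and v: "v \<in> A.KY Y" using u0 v0 A.restr_verts[OF Y(1)] by auto
    have fu: "f u \<in> B.KY Y" and fv: "f v \<in> B.KY Y" using fK u v by auto
    have "{u, v} \<in> edges (restr T Y) \<longleftrightarrow> A.adjK Y u v" using A.restr_edges[OF Y(1) u v] .
    also have "\<dots> \<longleftrightarrow> u \<noteq> v \<and> (\<forall>z\<in>A.KY Y. A.PY Y u \<inter> A.PY Y v \<subseteq> A.PY Y z \<longrightarrow> z = u \<or> z = v)"
      using A.adjK_PY[OF Y(1) u v] .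
    also have "\<dots> \<longleftrightarrow> f u \<noteq> f v \<and> (\<forall>z\<in>B.KY Y. B.PY Y (f u) \<inter> B.PY Y (f v) \<subseteq> B.PY Y z \<longrightarrow> z = f u \<or> z = f v)"
    proof -
      have 1: "u \<noteq> v \<longleftrightarrow> f u \<noteq> f v" using inj u v by (meson inj_on_eq_iff)
      have PYf: "\<And>x. x \<in> A.KY Y \<Longrightarrow> B.PY Y (f x) = A.PY Y x" using fK by blast
      have eqz: "\<And>z. z \<in> A.KY Y \<Longrightarrow> (z = u \<or> z = v) \<longleftrightarrow> (f z = f u \<or> f z = f v)"
        using inj u v by (meson inj_on_eq_iff)
      have 2: "(\<forall>z\<in>A.KY Y. A.PY Y u \<inter> A.PY Y v \<subseteq> A.PY Y z \<longrightarrow> z = u \<or> z = v) \<longleftrightarrow>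
          (\<forall>z\<in>A.KY Y. B.PY Y (f u) \<inter> B.PY Y (f v) \<subseteq> B.PY Y (f z) \<longrightarrow> f z = f u \<or> f z = f v)"
      proof (rule ball_cong[OF refl])
        fix z assume z: "z \<in> A.KY Y"
        show "(A.PY Y u \<inter> A.PY Y v \<subseteq> A.PY Y z \<longrightarrow> z = u \<or> z = v) \<longleftrightarrow>
          (B.PY Y (f u) \<inter> B.PY Y (f v) \<subseteq> B.PY Y (f z) \<longrightarrow> f z = f u \<or> f z = f v)"
          using PYf[OF u] PYf[OF v] PYf[OF z] eqz[OF z] by simp
      qed
      have 3: "(\<forall>z\<in>A.KY Y. B.PY Y (f u) \<inter> B.PY Y (f v) \<subseteq> B.PY Y (f z) \<longrightarrow> f z = f u \<or> f z = f v) \<longleftrightarrow>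
          (\<forall>z\<in>B.KY Y. B.PY Y (f u) \<inter> B.PY Y (f v) \<subseteq> B.PY Y z \<longrightarrow> z = f u \<or> z = f v)"
        unfolding img[symmetric] by simp
      show ?thesis using 1 2 3 by simp
    qed
    also have "\<dots> \<longleftrightarrow> B.adjK Y (f u) (f v)" using B.adjK_PY[OF Y(2) fu fv] by simp
    also have "\<dots> \<longleftrightarrow> {f u, f v} \<in> edges (restr T' Y)" using B.restr_edges[OF Y(2) fu fv] by simp
    finally show "{u, v} \<in> edges (restr T Y) \<longleftrightarrow> {f u, f v} \<in> edges (restr T' Y)" .
  qed
  show ?thesis unfolding iso_fixing_def using bij fixY edg by (intro exI[of _ f] conjI)
qed

definition qd :: "'v graph \<Rightarrow> 'v \<Rightarrow> 'v \<Rightarrow> 'v \<Rightarrow> 'v \<Rightarrow> bool" where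
  "qd T a b c d \<longleftrightarrow> set (tree.tp T a b) \<inter> set (tree.tp T c d) = {}"

context tree begin

lemma at_most_one:
  assumes a: "a \<in> verts T" and b: "b \<in> verts T" and c: "c \<in> verts T" and d: "d \<in> verts T"
    and q1: "qd T a b c d" and q2: "qd T a c b d"
  shows False
proof -
  obtain m where m: "m \<in> set (tp a b)" "m \<in> set (tp b c)" "m \<in> set (tp a c)"
    using median_exists[OF a b c] by blast
  have "m \<notin> set (tp c d)" using q1 m(1) unfolding qd_def by blast
  moreover have "m \<notin> set (tp b d)" using q2 m(3) unfolding qd_def by blast
  moreover have "set (tp b c) \<subseteq> set (tp b d) \<union> set (tp d c)" using triangle(1)[OF b d c] .
  ultimately show False using m(2) tp_set_sym[OF c d] by blast
qed

end

context ltree begin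

lemma at_least_one:
  assumes X: "a \<in> X" "b \<in> X" "c \<in> X" "d \<in> X" and dist: "distinct [a, b, c, d]"
  shows "qd T a b c d \<or> qd T a c b d \<or> qd T a d b c"
proof -
  have av: "a \<in> verts T" and bv: "b \<in> verts T" and cv: "c \<in> verts T" and dv: "d \<in> verts T"
    using X X_verts by auto
  obtain m where m: "m \<in> set (tp a b)" "m \<in> set (tp b c)" "m \<in> set (tp a c)"
    using median_exists[OF av bv cv] by blast
  have mv: "m \<in> verts T" using m av bv tp_verts by blast
  have mX: "m \<notin> X"
  proof
    assume mX: "m \<in> X"
    have "m = a \<or> m = b" using leaf_path[OF mX av bv m(1)] .
    moreover have "m = b \<or> m = c" using leaf_path[OF mX bv cv m(2)] .
    moreover have "m = a \<or> m = c" using leaf_path[OF mX av cv m(3)] .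
    ultimately show False using dist by auto
  qed
  have ne: "a \<noteq> m" "b \<noteq> m" "c \<noteq> m" "d \<noteq> m" using mX X by auto
  have d3: "nx m a \<noteq> nx m b" "nx m b \<noteq> nx m c" "nx m a \<noteq> nx m c"
    using sep_nx[OF mv] av bv cv ne m by blast+
  have sub: "{nx m a, nx m b, nx m c} \<subseteq> {n. {m, n} \<in> edges T}"
    using nx_props(2)[OF mv] av bv cv ne by auto
  have "card {n. {m, n} \<in> edges T} = 3" using deg_T[OF empty_subsetI] deg_int[OF mv mX] by simp
  moreover have "card {nx m a, nx m b, nx m c} = 3" using d3 by simp
  ultimately have eq: "{nx m a, nx m b, nx m c} = {n. {m, n} \<in> edges T}"
    using card_subset_eq[OF nbrs_fin[OF empty_subsetI] sub] by simp
  have "nx m d \<in> {n. {m, n} \<in> edges T}" using nx_props(2)[OF mv dv] ne by auto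
  then have "nx m d = nx m a \<or> nx m d = nx m b \<or> nx m d = nx m c" using eq by blast
  then show ?thesis
  proof (elim disjE)
    assume "nx m d = nx m a"
    then have "m \<notin> set (tp a d)" using sep_nx[OF mv av dv ne(1) ne(4)] by simp
    then have "set (tp d a) \<inter> set (tp b c) = {}" using L_disj[OF av bv cv dv m(1) m(3) m(2)] by blast
    then show ?thesis unfolding qd_def using tp_set_sym[OF av dv] by simp
  next
    assume "nx m d = nx m b"
    then have "m \<notin> set (tp b d)" using sep_nx[OF mv bv dv ne(2) ne(4)] by simp
    moreover have "m \<in> set (tp b a)" using m(1) tp_set_sym[OF av bv] by simp
    ultimately have "set (tp d b) \<inter> set (tp a c) = {}" using L_disj[OF bv av cv dv _ m(2) m(3)] by blast
    then show ?thesis unfolding qd_def using tp_set_sym[OF bv dv] by auto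
  next
    assume "nx m d = nx m c"
    then have "m \<notin> set (tp c d)" using sep_nx[OF mv cv dv ne(3) ne(4)] by simp
    moreover have "m \<in> set (tp c a)" "m \<in> set (tp c b)" using m tp_set_sym av bv cv by auto
    ultimately have "set (tp d c) \<inter> set (tp a b) = {}" using L_disj[OF cv av bv dv _ _ m(1)] by blast
    then show ?thesis unfolding qd_def using tp_set_sym[OF cv dv] by auto
  qed
qed

lemma qd_degen:
  assumes X: "a \<in> X" "b \<in> X" "c \<in> X" "d \<in> X" and nd: "\<not> distinct [a, b, c, d]"
  shows "qd T a b c d \<longleftrightarrow> {a, b} \<inter> {c, d} = {}"
proof -
  have av: "a \<in> verts T" and bv: "b \<in> verts T" and cv: "c \<in> verts T" and dv: "d \<in> verts T"
    using X X_verts by auto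
  show ?thesis
  proof (cases "{a, b} \<inter> {c, d} = {}")
    case False
    then have "a \<in> set (tp c d) \<or> b \<in> set (tp c d)" using tp_props(7,8)[OF cv dv] by auto
    then have "\<not> qd T a b c d" unfolding qd_def using tp_props(7,8)[OF av bv] by blast
    then show ?thesis using False by simp
  next
    case True
    then have "a = b \<or> c = d" using nd by auto
    then show ?thesis
    proof
      assume ab: "a = b"
      have "a \<notin> set (tp c d)" using leaf_path[OF X(1) cv dv] True by auto
      then show ?thesis unfolding qd_def using ab tp_refl[OF av] True by simp
    next
      assume cd: "c = d"
      have "c \<notin> set (tp a b)" using leaf_path[OF X(3) av bv] True by auto
      then show ?thesis unfolding qd_def using cd tp_refl[OF cv] True by simp
    qed
  qed
qed

lemma qd_canon:
  assumes X: "a \<in> X" "b \<in> X" "c \<in> X" "d \<in> X" and dist: "distinct [a, b, c, d]"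
    and q: "qd T a b c d"
    and xyzw: "x \<in> {a, b, c, d}" "y \<in> {a, b, c, d}" "z \<in> {a, b, c, d}" "w \<in> {a, b, c, d}"
    and d2: "distinct [x, y, z, w]"
  shows "qd T x y z w \<longleftrightarrow> ({x, y} = {a, b} \<or> {x, y} = {c, d})"
proof -
  have av: "a \<in> verts T" and bv: "b \<in> verts T" and cv: "c \<in> verts T" and dv: "d \<in> verts T"
    using X X_verts by auto
  have s: "set (tp b a) = set (tp a b)" "set (tp c a) = set (tp a c)" "set (tp d a) = set (tp a d)"
    "set (tp c b) = set (tp b c)" "set (tp d b) = set (tp b d)" "set (tp d c) = set (tp c d)"
    using tp_set_sym av bv cv dv by auto
  have k1: "set (tp a b) \<inter> set (tp c d) = {}" "set (tp c d) \<inter> set (tp a b) = {}"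
    using q unfolding qd_def by auto
  have k2: "set (tp a c) \<inter> set (tp b d) \<noteq> {}" "set (tp b d) \<inter> set (tp a c) \<noteq> {}"
    using at_most_one[OF av bv cv dv q] unfolding qd_def by auto
  have q': "qd T a b d c" using q unfolding qd_def using tp_set_sym[OF cv dv] by simp
  have k3: "set (tp a d) \<inter> set (tp b c) \<noteq> {}" "set (tp b c) \<inter> set (tp a d) \<noteq> {}"
    using at_most_one[OF av bv dv cv q'] tp_set_sym[OF bv cv] unfolding qd_def by auto
  show ?thesis
    using xyzw d2 dist
    by (elim insertE emptyE) (simp_all add: qd_def s k1 k2 k3 doubleton_eq_iff)
qed

end

lemma quartet_agree:
  assumes T1: "ltree T X" and T2: "ltree T' X'"
    and Q: "a \<in> X" "b \<in> X" "c \<in> X" "d \<in> X" "a \<in> X'" "b \<in> X'" "c \<in> X'" "d \<in> X'"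
    and dist: "distinct [a, b, c, d]" and q1: "qd T a b c d" and q2: "qd T' a b c d"
    and xyzw: "x \<in> {a, b, c, d}" "y \<in> {a, b, c, d}" "z \<in> {a, b, c, d}" "w \<in> {a, b, c, d}"
  shows "qd T x y z w \<longleftrightarrow> qd T' x y z w"
proof -
  interpret A: ltree T X by (rule T1)
  interpret B: ltree T' X' by (rule T2)
  have x1: "x \<in> X" "y \<in> X" "z \<in> X" "w \<in> X" using xyzw Q by auto
  have x2: "x \<in> X'" "y \<in> X'" "z \<in> X'" "w \<in> X'" using xyzw Q by auto
  show ?thesis
  proof (cases "distinct [x, y, z, w]")
    case True
    then show ?thesis using A.qd_canon[OF Q(1-4) dist q1 xyzw True] B.qd_canon[OF Q(5-8) dist q2 xyzw True]
      by simp
  next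
    case False
    then show ?thesis using A.qd_degen[OF x1 False] B.qd_degen[OF x2 False] by simp
  qed
qed

lemma QA_of_distinct:
  assumes T1: "ltree T X" and T2: "ltree T' X'" and Y: "Y \<subseteq> X" "Y \<subseteq> X'"
    and QD: "\<And>a b c d. a \<in> Y \<Longrightarrow> b \<in> Y \<Longrightarrow> c \<in> Y \<Longrightarrow> d \<in> Y \<Longrightarrow> distinct [a, b, c, d] \<Longrightarrow>
        qd T a b c d \<longleftrightarrow> qd T' a b c d"
    and abcd: "a \<in> Y" "b \<in> Y" "c \<in> Y" "d \<in> Y"
  shows "qd T a b c d \<longleftrightarrow> qd T' a b c d"
proof (cases "distinct [a, b, c, d]")
  case True then show ?thesis using QD abcd by blast
next
  case False
  interpret A: ltree T X by (rule T1)
  interpret B: ltree T' X' by (rule T2)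
  show ?thesis using A.qd_degen[of a b c d] B.qd_degen[of a b c d] False abcd Y by auto
qed

theorem iso_iff_qd:
  assumes T1: "ltree T X" and T2: "ltree T' X'" and Y: "Y \<subseteq> X" "Y \<subseteq> X'"
  shows "iso_fixing Y (restr T Y) (restr T' Y) \<longleftrightarrow>
    (\<forall>a\<in>Y. \<forall>b\<in>Y. \<forall>c\<in>Y. \<forall>d\<in>Y. qd T a b c d \<longleftrightarrow> qd T' a b c d)"
proof
  assume iso: "iso_fixing Y (restr T Y) (restr T' Y)"
  interpret A: ltree T X by (rule T1)
  have YG: "Y \<subseteq> verts (restr T Y)" using A.restr_verts[OF Y(1)] A.KY_Y[OF Y(1)] by simp
  have iso2: "iso_fixing Y (restr T' Y) (restr T Y)" using iso_sym[OF iso YG] .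
  show "\<forall>a\<in>Y. \<forall>b\<in>Y. \<forall>c\<in>Y. \<forall>d\<in>Y. qd T a b c d \<longleftrightarrow> qd T' a b c d"
  proof (intro ballI)
    fix a b c d assume abcd: "a \<in> Y" "b \<in> Y" "c \<in> Y" "d \<in> Y"
    have 1: "\<not> qd T a b c d \<Longrightarrow> \<not> qd T' a b c d"
      using iso_qd_aux[OF T1 T2 Y iso abcd] unfolding qd_def by blast
    have 2: "\<not> qd T' a b c d \<Longrightarrow> \<not> qd T a b c d"
      using iso_qd_aux[OF T2 T1 Y(2) Y(1) iso2 abcd] unfolding qd_def by blast
    show "qd T a b c d \<longleftrightarrow> qd T' a b c d" using 1 2 by blast
  qed
next
  assume "\<forall>a\<in>Y. \<forall>b\<in>Y. \<forall>c\<in>Y. \<forall>d\<in>Y. qd T a b c d \<longleftrightarrow> qd T' a b c d"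
  then show "iso_fixing Y (restr T Y) (restr T' Y)"
    using recon[OF T1 T2 Y] unfolding qd_def by blast
qed

lemma cycle_deg:
  assumes fin: "finite (edges G)" and w: "is_walk G c" and d: "distinct c" and L: "length c \<ge> 3"
    and cl: "{last c, hd c} \<in> edges G" and x: "x \<in> set c"
  shows "degree G x \<ge> 2"
proof -
  let ?L = "length c"
  obtain i where i: "i < ?L" "c ! i = x" using x by (metis in_set_conv_nth)
  define j1 where "j1 = (if i = 0 then ?L - 1 else i - 1)"
  define j2 where "j2 = (if i = ?L - 1 then 0 else i + 1)"
  have j1L: "j1 < ?L" and j2L: "j2 < ?L" using i L unfolding j1_def j2_def by auto
  have jne: "j1 \<noteq> j2" using i L unfolding j1_def j2_def by auto
  have cne: "c \<noteq> []" using L by auto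
  have hd: "hd c = c ! 0" and lst: "last c = c ! (?L - 1)" using cne by (auto simp: hd_conv_nth last_conv_nth)
  have we: "\<And>k. Suc k < ?L \<Longrightarrow> {c ! k, c ! Suc k} \<in> edges G" using w by (simp add: is_walk_def)
  have e1: "{c ! j1, x} \<in> edges G"
  proof (cases "i = 0")
    case True
    then show ?thesis using cl hd lst i unfolding j1_def by simp
  next
    case False
    then have "Suc (i - 1) < ?L" "Suc (i - 1) = i" using i by auto
    then show ?thesis using we[of "i - 1"] i False unfolding j1_def by simp
  qed
  have e2: "{x, c ! j2} \<in> edges G"
  proof (cases "i = ?L - 1")
    case True
    then show ?thesis using cl hd lst i unfolding j2_def by (simp add: insert_commute)
  next
    case False
    then have "Suc i < ?L" using i by auto
    then show ?thesis using we[of i] i False unfolding j2_def by simp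
  qed
  have "c ! j1 \<noteq> c ! j2" using nth_eq_iff_index_eq[OF d j1L j2L] jne by simp
  then have "{c ! j1, x} \<noteq> {x, c ! j2}" by (auto simp: doubleton_eq_iff)
  then have "card {{c ! j1, x}, {x, c ! j2}} = 2" by simp
  moreover have "{{c ! j1, x}, {x, c ! j2}} \<subseteq> {e \<in> edges G. x \<in> e}" using e1 e2 by auto
  moreover have "finite {e \<in> edges G. x \<in> e}" using fin by simp
  ultimately show ?thesis unfolding degree_def by (metis card_mono)
qed

lemma conn_hub:
  assumes h: "\<forall>x\<in>verts G. \<exists>p. is_walk G p \<and> hd p = x \<and> last p = hub"
  shows "connected_graph G"
  unfolding connected_graph_def
proof (intro ballI)
  fix x y assume x: "x \<in> verts G" and y: "y \<in> verts G"
  obtain p where p: "is_walk G p" "hd p = x" "last p = hub" using h x by blast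
  obtain q where q: "is_walk G q" "hd q = y" "last q = hub" using h y by blast
  obtain A where A: "p = A @ [hub]" using p by (metis append_butlast_last_id is_walk_Nil)
  obtain B where B: "rev q = hub # B" using q
    by (metis append_butlast_last_id is_walk_Nil rev.simps(2) rev_rev_ident rev_is_Nil_conv)
  have "is_walk G (A @ hub # B)" using walk_glue[of G A hub B] p(1) is_walk_rev[OF q(1)] A B by simp
  moreover have "hd (A @ hub # B) = x" using p A by (cases A) auto
  moreover have "last (A @ hub # B) = y"
  proof -
    have "last (hub # B) = last (rev q)" using B by simp
    also have "\<dots> = hd q" using q(1) by (simp add: last_rev)
    finally show ?thesis using q(2) by (cases B) auto
  qed
  ultimately show "\<exists>p. is_path G x y p" using walk_to_path by metis
qed

definition G0 :: "'v \<Rightarrow> 'v \<Rightarrow> 'v \<Rightarrow> 'v \<Rightarrow> 'v \<Rightarrow> 'v \<Rightarrow> 'v graph" where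
  "G0 a b c d u v = ({a, b, c, d, u, v}, {{a, u}, {b, u}, {c, v}, {d, v}, {u, v}})"

context
  fixes a b c d u v :: 'v
  assumes dist: "distinct [a, b, c, d, u, v]"
begin

lemma G0_verts: "verts (G0 a b c d u v) = {a, b, c, d, u, v}" by (simp add: G0_def verts_def)
lemma G0_edges: "edges (G0 a b c d u v) = {{a, u}, {b, u}, {c, v}, {d, v}, {u, v}}" by (simp add: G0_def edges_def)

lemma G0_wf: "wf_graph (G0 a b c d u v)"
  unfolding wf_graph_def G0_verts G0_edges using dist by auto

lemma G0_deg:
  "degree (G0 a b c d u v) a = 1" "degree (G0 a b c d u v) b = 1"
  "degree (G0 a b c d u v) c = 1" "degree (G0 a b c d u v) d = 1"
  "degree (G0 a b c d u v) u = 3" "degree (G0 a b c d u v) v = 3"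
proof -
  have "{e \<in> {{a, u}, {b, u}, {c, v}, {d, v}, {u, v}}. a \<in> e} = {{a, u}}" using dist by auto
  then show "degree (G0 a b c d u v) a = 1" unfolding degree_def G0_edges by simp
  have "{e \<in> {{a, u}, {b, u}, {c, v}, {d, v}, {u, v}}. b \<in> e} = {{b, u}}" using dist by auto
  then show "degree (G0 a b c d u v) b = 1" unfolding degree_def G0_edges by simp
  have "{e \<in> {{a, u}, {b, u}, {c, v}, {d, v}, {u, v}}. c \<in> e} = {{c, v}}" using dist by auto
  then show "degree (G0 a b c d u v) c = 1" unfolding degree_def G0_edges by simp
  have "{e \<in> {{a, u}, {b, u}, {c, v}, {d, v}, {u, v}}. d \<in> e} = {{d, v}}" using dist by auto
  then show "degree (G0 a b c d u v) d = 1" unfolding degree_def G0_edges by simp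
  have "{e \<in> {{a, u}, {b, u}, {c, v}, {d, v}, {u, v}}. u \<in> e} = {{a, u}, {b, u}, {u, v}}" using dist by auto
  moreover have "card {{a, u}, {b, u}, {u, v}} = 3" using dist by (simp add: doubleton_eq_iff)
  ultimately show "degree (G0 a b c d u v) u = 3" unfolding degree_def G0_edges by simp
  have "{e \<in> {{a, u}, {b, u}, {c, v}, {d, v}, {u, v}}. v \<in> e} = {{c, v}, {d, v}, {u, v}}" using dist by auto
  moreover have "card {{c, v}, {d, v}, {u, v}} = 3" using dist by (simp add: doubleton_eq_iff)
  ultimately show "degree (G0 a b c d u v) v = 3" unfolding degree_def G0_edges by simp
qed

lemma G0_conn: "connected_graph (G0 a b c d u v)"
proof (rule conn_hub[where hub = u], intro ballI)
  fix x assume "x \<in> verts (G0 a b c d u v)"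
  then have "x \<in> {a, b, c, d, u, v}" using G0_verts by simp
  then show "\<exists>p. is_walk (G0 a b c d u v) p \<and> hd p = x \<and> last p = u"
  proof (elim insertE emptyE)
    assume "x = a" then show ?thesis
      by (intro exI[of _ "[a, u]"]) (simp add: is_walk_Cons2 G0_verts G0_edges)
  next
    assume "x = b" then show ?thesis
      by (intro exI[of _ "[b, u]"]) (simp add: is_walk_Cons2 G0_verts G0_edges)
  next
    assume "x = c" then show ?thesis
      by (intro exI[of _ "[c, v, u]"]) (simp add: is_walk_Cons2 G0_verts G0_edges insert_commute)
  next
    assume "x = d" then show ?thesis
      by (intro exI[of _ "[d, v, u]"]) (simp add: is_walk_Cons2 G0_verts G0_edges insert_commute)
  next
    assume "x = u" then show ?thesis
      by (intro exI[of _ "[u]"]) (simp add: G0_verts)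
  next
    assume "x = v" then show ?thesis
      by (intro exI[of _ "[v, u]"]) (simp add: is_walk_Cons2 G0_verts G0_edges insert_commute)
  qed
qed

lemma G0_acyc: "acyclic_graph (G0 a b c d u v)"
  unfolding acyclic_graph_def
proof
  assume "\<exists>p. is_walk (G0 a b c d u v) p \<and> distinct p \<and> 3 \<le> length p \<and> {last p, hd p} \<in> edges (G0 a b c d u v)"
  then obtain p where p: "is_walk (G0 a b c d u v) p" "distinct p" "3 \<le> length p"
    "{last p, hd p} \<in> edges (G0 a b c d u v)" by blast
  have fin: "finite (edges (G0 a b c d u v))" by (simp add: G0_edges)
  have "\<And>x. x \<in> set p \<Longrightarrow> degree (G0 a b c d u v) x \<ge> 2" using cycle_deg[OF fin p] by blast
  then have "a \<notin> set p" "b \<notin> set p" "c \<notin> set p" "d \<notin> set p" using G0_deg by force+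
  moreover have "set p \<subseteq> {a, b, c, d, u, v}" using p(1) G0_verts by (simp add: is_walk_def)
  ultimately have "set p \<subseteq> {u, v}" by blast
  then have "card (set p) \<le> card {u, v}" by (intro card_mono) auto
  moreover have "card {u, v} \<le> 2" by (cases "u = v") auto
  ultimately have "card (set p) \<le> 2" by linarith
  then show False using p(2,3) distinct_card by fastforce
qed

lemma G0_ltree: "ltree (G0 a b c d u v) {a, b, c, d}"
proof -
  have tr: "is_tree (G0 a b c d u v)" using G0_wf G0_conn G0_acyc by (simp add: is_tree_def)
  have "phylo_tree {a, b, c, d} (G0 a b c d u v)"
    unfolding phylo_tree_def using tr G0_deg dist by (auto simp: G0_verts)
  then show ?thesis using tr by (simp add: ltree_def ltree_axioms_def tree_def)
qed

end

context ltree begin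
context fixes Y assumes Y: "Y \<subseteq> X"
begin

lemma restr_self:
  assumes KV: "KY Y = verts T"
  shows "restr T Y = T"
proof -
  have V: "verts (restr T Y) = verts T" using restr_verts[OF Y] KV by simp
  have E: "edges (restr T Y) = edges T"
  proof
    show "edges (restr T Y) \<subseteq> edges T"
    proof
      fix e assume e: "e \<in> edges (restr T Y)"
      then obtain x y where xy: "e = {x, y}" "x \<in> KY Y" "y \<in> KY Y"
        unfolding restr_eq[OF Y] edges_def by auto
      have "adjK Y x y" using restr_edges[OF Y xy(2,3)] e xy(1) by simp
      then have ne: "x \<noteq> y" and sub: "\<forall>z\<in>KY Y. z \<in> set (tp x y) \<longrightarrow> z = x \<or> z = y"
        unfolding adjK_def[OF Y] by auto
      have xv: "x \<in> verts T" and yv: "y \<in> verts T" using xy KV by auto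
      have n: "tp x y = x # tp (nx x y) y" "{x, nx x y} \<in> edges T" "nx x y \<in> set (tp x y)"
        using nx_props[OF xv yv ne] by auto
      have "nx x y \<in> verts T" using nx_props(3)[OF xv yv ne] .
      then have "nx x y = x \<or> nx x y = y" using sub KV n(3) by blast
      moreover have "nx x y \<noteq> x" using not_sym[OF conjunct1[OF edge_props[OF n(2)]]] .
      ultimately have "nx x y = y" by blast
      then show "e \<in> edges T" using n(2) xy(1) by simp
    qed
    show "edges T \<subseteq> edges (restr T Y)"
    proof
      fix e assume e: "e \<in> edges T"
      then obtain x y where xy: "e = {x, y}" using edges_pairs by blast
      have p: "x \<noteq> y" "x \<in> verts T" "y \<in> verts T" using edge_props e xy by auto
      have "tp x y = [x, y]" using edge_tp e xy by simp
      then have "adjK Y x y" unfolding adjK_def[OF Y] using p by auto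
      then show "e \<in> edges (restr T Y)" using restr_edges[OF Y] p KV xy by simp
    qed
  qed
  show ?thesis using V E by (metis edges_def prod.collapse verts_def)
qed

end
end

context
  fixes a b c d u v :: 'v
  assumes dist: "distinct [a, b, c, d, u, v]"
begin

interpretation G: ltree "G0 a b c d u v" "{a, b, c, d}" by (rule G0_ltree[OF dist])

lemma G0_tps:
  "G.tp a b = [a, u, b]" "G.tp b c = [b, u, v, c]" "G.tp a c = [a, u, v, c]"
  "G.tp c d = [c, v, d]" "G.tp a d = [a, u, v, d]"
  using dist by (auto intro!: G.tp_eq simp: is_path_def is_walk_Cons2 G0_verts[OF dist] G0_edges[OF dist] insert_commute)

lemma G0_restr: "restr (G0 a b c d u v) {a, b, c, d} = G0 a b c d u v"
proof (rule G.restr_self)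
  show "{a, b, c, d} \<subseteq> {a, b, c, d}" by simp
  have "a \<noteq> b \<and> b \<noteq> c \<and> a \<noteq> c \<and> u \<in> set (G.tp a b) \<and> u \<in> set (G.tp b c) \<and> u \<in> set (G.tp a c)"
    using dist G0_tps by simp
  then have "u \<in> G.MY {a, b, c, d}" unfolding G.MY_def by blast
  moreover have "a \<noteq> c \<and> c \<noteq> d \<and> a \<noteq> d \<and> v \<in> set (G.tp a c) \<and> v \<in> set (G.tp c d) \<and> v \<in> set (G.tp a d)"
    using dist G0_tps by simp
  then have "v \<in> G.MY {a, b, c, d}" unfolding G.MY_def by blast
  moreover have "G.MY {a, b, c, d} \<subseteq> verts (G0 a b c d u v)"
    using G.MY_VY G.VY_verts by blast
  ultimately show "G.KY {a, b, c, d} = verts (G0 a b c d u v)"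
    unfolding G.KY_def G0_verts[OF dist] by auto
qed

lemma G0_qd: "qd (G0 a b c d u v) a b c d"
  unfolding qd_def using G0_tps dist by auto

end

lemma split_iff:
  assumes T1: "ltree T X" and X: "a \<in> X" "b \<in> X" "c \<in> X" "d \<in> X" and dist: "distinct [a, b, c, d]"
  shows "is_split (restr T {a, b, c, d}) a b c d \<longleftrightarrow> qd T a b c d"
proof
  interpret A: ltree T X by (rule T1)
  let ?Q = "{a, b, c, d}"
  have QX: "?Q \<subseteq> X" using X by auto
  assume "is_split (restr T ?Q) a b c d"
  then obtain u v where uv: "distinct [a, b, c, d, u, v]"
    "iso_fixing ?Q (restr T ?Q) (G0 a b c d u v)" unfolding is_split_def G0_def by blast
  have G: "ltree (G0 a b c d u v) ?Q" using G0_ltree[OF uv(1)] .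
  have "iso_fixing ?Q (restr T ?Q) (restr (G0 a b c d u v) ?Q)" using uv(2) G0_restr[OF uv(1)] by simp
  then have "\<forall>x\<in>?Q. \<forall>y\<in>?Q. \<forall>z\<in>?Q. \<forall>w\<in>?Q. qd T x y z w \<longleftrightarrow> qd (G0 a b c d u v) x y z w"
    using iso_iff_qd[OF T1 G QX subset_refl] by blast
  then show "qd T a b c d" using G0_qd[OF uv(1)] by simp
next
  interpret A: ltree T X by (rule T1)
  let ?Q = "{a, b, c, d}"
  have QX: "?Q \<subseteq> X" using X by auto
  assume q: "qd T a b c d"
  have av: "a \<in> verts T" and bv: "b \<in> verts T" and cv: "c \<in> verts T" and dv: "d \<in> verts T"
    using X A.X_verts by auto
  obtain m1 where m1: "m1 \<in> set (A.tp a b)" "m1 \<in> set (A.tp b c)" "m1 \<in> set (A.tp a c)"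
    using A.median_exists[OF av bv cv] by blast
  obtain m2 where m2: "m2 \<in> set (A.tp c d)" "m2 \<in> set (A.tp d a)" "m2 \<in> set (A.tp c a)"
    using A.median_exists[OF cv dv av] by blast
  have m12: "m1 \<noteq> m2" using q m1(1) m2(1) unfolding qd_def by blast
  have m1X: "m1 \<notin> X"
  proof
    assume mX: "m1 \<in> X"
    have "m1 = a \<or> m1 = b" "m1 = b \<or> m1 = c" "m1 = a \<or> m1 = c"
      using A.leaf_path[OF mX av bv m1(1)] A.leaf_path[OF mX bv cv m1(2)] A.leaf_path[OF mX av cv m1(3)] by auto
    then show False using dist by auto
  qed
  have m2X: "m2 \<notin> X"
  proof
    assume mX: "m2 \<in> X"
    have "m2 = c \<or> m2 = d" "m2 = d \<or> m2 = a" "m2 = c \<or> m2 = a"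
      using A.leaf_path[OF mX cv dv m2(1)] A.leaf_path[OF mX dv av m2(2)] A.leaf_path[OF mX cv av m2(3)] by auto
    then show False using dist by auto
  qed
  have dist6: "distinct [a, b, c, d, m1, m2]" using dist m12 m1X m2X X by auto
  have G: "ltree (G0 a b c d m1 m2) ?Q" using G0_ltree[OF dist6] .
  have "\<forall>x\<in>?Q. \<forall>y\<in>?Q. \<forall>z\<in>?Q. \<forall>w\<in>?Q. qd T x y z w \<longleftrightarrow> qd (G0 a b c d m1 m2) x y z w"
    using quartet_agree[OF T1 G X _ _ _ _ dist q G0_qd[OF dist6]] by blast
  then have "iso_fixing ?Q (restr T ?Q) (restr (G0 a b c d m1 m2) ?Q)"
    using iso_iff_qd[OF T1 G QX subset_refl] by blast
  then have "iso_fixing ?Q (restr T ?Q) (G0 a b c d m1 m2)" using G0_restr[OF dist6] by simp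
  then show "is_split (restr T ?Q) a b c d" unfolding is_split_def G0_def using dist6 by blast
qed

lemma mk_ltree: "phylo_tree X T \<Longrightarrow> ltree T X"
  by (simp add: ltree_def ltree_axioms_def tree_def phylo_tree_def)

lemma span2_edges:
  assumes T1: "ltree T X" and a: "a \<in> X" and b: "b \<in> X"
  shows "edges (span T {a, b}) = list_edges (tree.tp T a b)"
proof -
  interpret A: ltree T X by (rule T1)
  have Y: "{a, b} \<subseteq> X" using a b by auto
  have av: "a \<in> verts T" and bv: "b \<in> verts T" using a b A.X_verts by auto
  have "edges (span T {a, b}) = A.EY {a, b}" using A.span_eq[OF Y] by (simp add: edges_def)
  also have "\<dots> = list_edges (A.tp a b) \<union> list_edges (A.tp b a) \<union> list_edges (A.tp a a) \<union> list_edges (A.tp b b)"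
    unfolding A.EY_def by auto
  also have "\<dots> = list_edges (A.tp a b)" using A.tp_refl[OF av] A.tp_refl[OF bv] A.tp_edges_sym[OF av bv] by simp
  finally show ?thesis .
qed

lemma span_verts:
  assumes T1: "ltree T X" and Y: "Y \<subseteq> X"
  shows "verts (span T Y) = {v. \<exists>a\<in>Y. \<exists>b\<in>Y. v \<in> set (tree.tp T a b)}"
proof -
  interpret A: ltree T X by (rule T1)
  show ?thesis using A.span_eq[OF Y] by (simp add: verts_def A.VY_def)
qed

lemma sum_ind:
  assumes "finite L"
  shows "(1 \<le> (\<Sum>e\<in>L. if e \<in> E then (1::int) else 0)) \<longleftrightarrow> L \<inter> E \<noteq> {}"
proof -
  have "(\<Sum>e\<in>L. if e \<in> E then (1::int) else 0) = (\<Sum>e\<in>L \<inter> {e. e \<in> E}. 1) + (\<Sum>e\<in>L \<inter> - {e. e \<in> E}. 0)"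
    by (rule sum.If_cases[OF assms])
  also have "\<dots> = int (card (L \<inter> E))" by simp
  finally have eq: "(\<Sum>e\<in>L. if e \<in> E then (1::int) else 0) = int (card (L \<inter> E))" .
  have "finite (L \<inter> E)" using assms by simp
  then show ?thesis unfolding eq by (simp add: card_gt_0_iff Suc_le_eq)
qed

lemma card4: "distinct [a, b, c, d] \<Longrightarrow> card {a, b, c, d} = 4"
  by simp

lemma card4_distinct:
  assumes "card {a, b, c, d} = 4" shows "distinct [a, b, c, d]"
proof (rule ccontr)
  assume "\<not> distinct [a, b, c, d]"
  then have "card {a, b, c, d} \<le> 3"
    by (auto simp: card_insert_if insert_absorb)
  then show False using assms by simp
qed

theorem theorem2:
  fixes X :: "'v set" and T :: "nat \<Rightarrow> 'v graph" and t :: nat and E :: "'v set set"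
  assumes "finite X" and "1 \<le> t"
    and "\<forall>i\<in>{1..t}. phylo_tree X (T i)"
    and "E \<subseteq> edges (T 1)"
  shows "ip_feasible X T t (\<lambda>e. if e \<in> E then 1 else 0)
         \<longleftrightarrow> agreement_forest X T t (forest_of X (T 1) E)"
proof -
  note t1 = assms(2) and ph = assms(3)
  have LT: "\<And>i. i \<in> {1..t} \<Longrightarrow> ltree (T i) X" using ph mk_ltree by blast
  have i1: "1 \<in> {1..t}" using t1 by simp
  have L1: "ltree (T 1) X" using LT[OF i1] .
  interpret A: ltree "T 1" X by (rule L1)
  define R where "R a b \<longleftrightarrow> list_edges (A.tp a b) \<inter> E = {}" for a b
  define cls where "cls a = {b \<in> X. R a b}" for a
  have Xv: "\<And>x. x \<in> X \<Longrightarrow> x \<in> verts (T 1)" using A.X_verts by blast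
  have Rrefl: "\<And>a. a \<in> X \<Longrightarrow> R a a" unfolding R_def using A.tp_refl Xv by simp
  have Rsym: "\<And>a b. a \<in> X \<Longrightarrow> b \<in> X \<Longrightarrow> R a b \<Longrightarrow> R b a" unfolding R_def using A.tp_edges_sym Xv by simp
  have Rtrans: "\<And>a b c. a \<in> X \<Longrightarrow> b \<in> X \<Longrightarrow> c \<in> X \<Longrightarrow> R a b \<Longrightarrow> R b c \<Longrightarrow> R a c"
  proof -
    fix a b c assume abc: "a \<in> X" "b \<in> X" "c \<in> X" "R a b" "R b c"
    have "list_edges (A.tp a c) \<subseteq> list_edges (A.tp a b) \<union> list_edges (A.tp b c)"
      using A.triangle(2)[OF Xv[OF abc(1)] Xv[OF abc(2)] Xv[OF abc(3)]] .
    then show "R a c" using abc(4,5) unfolding R_def by blast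
  qed
  have FE: "forest_of X (T 1) E = cls ` X"
  proof -
    have "\<And>a b. a \<in> X \<Longrightarrow> b \<in> X \<Longrightarrow> edges (span (T 1) {a, b}) = list_edges (A.tp a b)"
      using span2_edges[OF L1] by blast
    then have "\<And>a. a \<in> X \<Longrightarrow> {b \<in> X. edges (span (T 1) {a, b}) \<inter> E = {}} = cls a"
      unfolding cls_def R_def by auto
    then show ?thesis unfolding forest_of_def by (auto simp: image_def)
  qed
  have cls_self: "\<And>a. a \<in> X \<Longrightarrow> a \<in> cls a" using Rrefl unfolding cls_def by simp
  have cls_sub: "\<And>a. cls a \<subseteq> X" unfolding cls_def by blast
  have cls_eq: "\<And>a b. a \<in> X \<Longrightarrow> b \<in> cls a \<Longrightarrow> cls b = cls a"
  proof -
    fix a b assume a: "a \<in> X" and b: "b \<in> cls a"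
    then have bX: "b \<in> X" and Rab: "R a b" unfolding cls_def by auto
    show "cls b = cls a"
    proof
      show "cls b \<subseteq> cls a" unfolding cls_def using Rtrans[OF a bX] Rab by blast
      show "cls a \<subseteq> cls b" unfolding cls_def using Rtrans[OF bX a] Rsym[OF a bX Rab] by blast
    qed
  qed
  have cls_R: "\<And>Y x y. Y \<in> cls ` X \<Longrightarrow> x \<in> Y \<Longrightarrow> y \<in> Y \<Longrightarrow> R x y"
  proof -
    fix Y x y assume Y: "Y \<in> cls ` X" and x: "x \<in> Y" and y: "y \<in> Y"
    then obtain a where a: "a \<in> X" "Y = cls a" by blast
    have xX: "x \<in> X" and yX: "y \<in> X" "R a x" "R a y" using x y a unfolding cls_def by auto
    show "R x y" using Rtrans[OF xX a(1) yX(1) Rsym[OF a(1) xX yX(2)] yX(3)] .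
  qed
  have cls_disj: "\<And>Y Z x y. Y \<in> cls ` X \<Longrightarrow> Z \<in> cls ` X \<Longrightarrow> Y \<noteq> Z \<Longrightarrow> x \<in> Y \<Longrightarrow> y \<in> Z \<Longrightarrow> \<not> R x y"
  proof
    fix Y Z x y assume Y: "Y \<in> cls ` X" and Z: "Z \<in> cls ` X" and ne: "Y \<noteq> Z" and x: "x \<in> Y" and y: "y \<in> Z"
      and Rxy: "R x y"
    obtain a where a: "a \<in> X" "Y = cls a" using Y by blast
    obtain b where b: "b \<in> X" "Z = cls b" using Z by blast
    have xX: "x \<in> X" using x a cls_sub by blast
    have "cls x = Y" using cls_eq[OF a(1)] x a(2) by simp
    moreover have "y \<in> cls x" using Rxy y b cls_sub unfolding cls_def by blast
    moreover have "cls y = Z" using cls_eq[OF b(1)] y b(2) by simp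
    ultimately show False using cls_eq[OF xX] ne by metis
  qed
  have part: "is_partition (cls ` X) X"
    unfolding is_partition_def
  proof (intro conjI ballI impI)
    fix Y assume "Y \<in> cls ` X" then show "Y \<noteq> {}" using cls_self by blast
  next
    show "\<Union> (cls ` X) = X" using cls_self cls_sub by blast
  next
    fix Y Z assume Y: "Y \<in> cls ` X" and Z: "Z \<in> cls ` X" and ne: "Y \<noteq> Z"
    show "Y \<inter> Z = {}"
    proof (rule ccontr)
      assume "Y \<inter> Z \<noteq> {}"
      then obtain x where "x \<in> Y" "x \<in> Z" by blast
      then have "R x x" using cls_R Y by blast
      then show False using cls_disj[OF Y Z ne \<open>x \<in> Y\<close> \<open>x \<in> Z\<close>] by simp
    qed
  qed
  have Ledges: "\<And>a b c d. a \<in> X \<Longrightarrow> b \<in> X \<Longrightarrow> c \<in> X \<Longrightarrow> d \<in> X \<Longrightarrow>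
      L_edges (T 1) a b c d = list_edges (A.tp a b) \<union> list_edges (A.tp c d)"
    unfolding L_edges_def using span2_edges[OF L1] by simp
  have key: "\<And>a b c d. a \<in> X \<Longrightarrow> b \<in> X \<Longrightarrow> c \<in> X \<Longrightarrow> d \<in> X \<Longrightarrow>
      (1 \<le> (\<Sum>e\<in>L_edges (T 1) a b c d. if e \<in> E then (1::int) else 0)) \<longleftrightarrow> \<not> (R a b \<and> R c d)"
  proof -
    fix a b c d assume abcd: "a \<in> X" "b \<in> X" "c \<in> X" "d \<in> X"
    have fin: "finite (L_edges (T 1) a b c d)"
    proof -
      have "L_edges (T 1) a b c d \<subseteq> edges (T 1)"
        using Ledges[OF abcd] A.tp_edges_T Xv abcd by blast
      then show ?thesis using A.fin_edges finite_subset by blast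
    qed
    show "(1 \<le> (\<Sum>e\<in>L_edges (T 1) a b c d. if e \<in> E then (1::int) else 0)) \<longleftrightarrow> \<not> (R a b \<and> R c d)"
      using sum_ind[OF fin, of E] Ledges[OF abcd] unfolding R_def by auto
  qed
  have inc_sub: "\<And>Q. Q \<in> all_incompatible X T t \<Longrightarrow> Q \<subseteq> X"
    unfolding all_incompatible_def incompatible_quartets_def is_quartet_def by auto
  have feas_iff: "ip_feasible X T t (\<lambda>e. if e \<in> E then 1 else 0) \<longleftrightarrow>
      (\<forall>Q\<in>all_incompatible X T t. \<forall>a b c d. Q = {a, b, c, d} \<and> is_split (restr (T 1) Q) a b c d \<longrightarrow> \<not> (R a b \<and> R c d))"
  proof -
    have "\<And>Q a b c d. Q \<in> all_incompatible X T t \<Longrightarrow> Q = {a, b, c, d} \<Longrightarrow>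
       (1 \<le> (\<Sum>e\<in>L_edges (T 1) a b c d. if e \<in> E then (1::int) else 0)) \<longleftrightarrow> \<not> (R a b \<and> R c d)"
    proof -
      fix Q a b c d assume Q: "Q \<in> all_incompatible X T t" "Q = {a, b, c, d}"
      then have "a \<in> X" "b \<in> X" "c \<in> X" "d \<in> X" using inc_sub by auto
      then show "(1 \<le> (\<Sum>e\<in>L_edges (T 1) a b c d. if e \<in> E then (1::int) else 0)) \<longleftrightarrow> \<not> (R a b \<and> R c d)"
        using key by blast
    qed
    note H = this
    have first: "\<forall>e\<in>edges (T 1). (if e \<in> E then 1 else 0::int) \<in> {0, 1}" by simp
    show ?thesis
    proof
      assume "ip_feasible X T t (\<lambda>e. if e \<in> E then 1 else 0)"
      then have G: "\<forall>Q\<in>all_incompatible X T t. \<forall>a b c d. Q = {a, b, c, d} \<and> is_split (restr (T 1) Q) a b c d \<longrightarrow>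
          1 \<le> (\<Sum>e\<in>L_edges (T 1) a b c d. if e \<in> E then (1::int) else 0)"
        unfolding ip_feasible_def by (rule conjunct2)
      show "\<forall>Q\<in>all_incompatible X T t. \<forall>a b c d. Q = {a, b, c, d} \<and> is_split (restr (T 1) Q) a b c d \<longrightarrow> \<not> (R a b \<and> R c d)"
      proof (intro ballI allI impI)
        fix Q a b c d assume Q: "Q \<in> all_incompatible X T t" and sp: "Q = {a, b, c, d} \<and> is_split (restr (T 1) Q) a b c d"
        have "1 \<le> (\<Sum>e\<in>L_edges (T 1) a b c d. if e \<in> E then (1::int) else 0)" using G[rule_format, OF Q sp] .
        moreover have "Q = {a, b, c, d}" using sp by simp
        ultimately show "\<not> (R a b \<and> R c d)" using H[OF Q] by simp
      qed
    next
      assume G: "\<forall>Q\<in>all_incompatible X T t. \<forall>a b c d. Q = {a, b, c, d} \<and> is_split (restr (T 1) Q) a b c d \<longrightarrow> \<not> (R a b \<and> R c d)"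
      have "\<forall>Q\<in>all_incompatible X T t. \<forall>a b c d. Q = {a, b, c, d} \<and> is_split (restr (T 1) Q) a b c d \<longrightarrow>
          1 \<le> (\<Sum>e\<in>L_edges (T 1) a b c d. if e \<in> E then (1::int) else 0)"
      proof (intro ballI allI impI)
        fix Q a b c d assume Q: "Q \<in> all_incompatible X T t" and sp: "Q = {a, b, c, d} \<and> is_split (restr (T 1) Q) a b c d"
        have "\<not> (R a b \<and> R c d)" using G[rule_format, OF Q sp] .
        moreover have "Q = {a, b, c, d}" using sp by simp
        ultimately show "1 \<le> (\<Sum>e\<in>L_edges (T 1) a b c d. if e \<in> E then (1::int) else 0)" using H[OF Q] by simp
      qed
      then show "ip_feasible X T t (\<lambda>e. if e \<in> E then 1 else 0)" unfolding ip_feasible_def using first by (intro conjI)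
    qed
  qed
  have iso_Q: "\<And>i a b c d. i \<in> {1..t} \<Longrightarrow> a \<in> X \<Longrightarrow> b \<in> X \<Longrightarrow> c \<in> X \<Longrightarrow> d \<in> X \<Longrightarrow>
      iso_fixing {a, b, c, d} (restr (T 1) {a, b, c, d}) (restr (T i) {a, b, c, d}) \<longleftrightarrow>
      (\<forall>x\<in>{a, b, c, d}. \<forall>y\<in>{a, b, c, d}. \<forall>z\<in>{a, b, c, d}. \<forall>w\<in>{a, b, c, d}. qd (T 1) x y z w \<longleftrightarrow> qd (T i) x y z w)"
  proof -
    fix i a b c d assume i: "i \<in> {1..t}" and abcd: "a \<in> X" "b \<in> X" "c \<in> X" "d \<in> X"
    have QX: "{a, b, c, d} \<subseteq> X" using abcd by auto
    show "?thesis i a b c d" using iso_iff_qd[OF L1 LT[OF i] QX QX] .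
  qed
  have mkinc: "\<And>i a b c d. i \<in> {2..t} \<Longrightarrow> a \<in> X \<Longrightarrow> b \<in> X \<Longrightarrow> c \<in> X \<Longrightarrow> d \<in> X \<Longrightarrow> distinct [a, b, c, d] \<Longrightarrow>
      \<not> (qd (T 1) a b c d \<longleftrightarrow> qd (T i) a b c d) \<Longrightarrow> {a, b, c, d} \<in> all_incompatible X T t"
  proof -
    fix i a b c d assume i: "i \<in> {2..t}" and abcd: "a \<in> X" "b \<in> X" "c \<in> X" "d \<in> X"
      and dist: "distinct [a, b, c, d]" and nq: "\<not> (qd (T 1) a b c d \<longleftrightarrow> qd (T i) a b c d)"
    have i': "i \<in> {1..t}" using i by simp
    have "\<not> iso_fixing {a, b, c, d} (restr (T 1) {a, b, c, d}) (restr (T i) {a, b, c, d})"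
      using iso_Q[OF i' abcd] nq by auto
    moreover have "is_quartet X {a, b, c, d}" unfolding is_quartet_def using abcd card4[OF dist] by auto
    ultimately show "{a, b, c, d} \<in> all_incompatible X T t"
      unfolding all_incompatible_def incompatible_quartets_def using i by blast
  qed
  show ?thesis
  proof
    assume F: "ip_feasible X T t (\<lambda>e. if e \<in> E then 1 else 0)"
    have Fc: "\<And>Q a b c d. Q \<in> all_incompatible X T t \<Longrightarrow> Q = {a, b, c, d} \<Longrightarrow> is_split (restr (T 1) Q) a b c d \<Longrightarrow> \<not> (R a b \<and> R c d)"
      using iffD1[OF feas_iff F] by blast
    have noinc: "\<And>a b c d. a \<in> X \<Longrightarrow> b \<in> X \<Longrightarrow> c \<in> X \<Longrightarrow> d \<in> X \<Longrightarrow> distinct [a, b, c, d] \<Longrightarrow>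
        R a b \<Longrightarrow> R c d \<Longrightarrow> R a c \<Longrightarrow> R b d \<Longrightarrow> R a d \<Longrightarrow> R b c \<Longrightarrow> {a, b, c, d} \<notin> all_incompatible X T t"
    proof
      fix a b c d assume abcd: "a \<in> X" "b \<in> X" "c \<in> X" "d \<in> X" and dist: "distinct [a, b, c, d]"
        and Rs: "R a b" "R c d" "R a c" "R b d" "R a d" "R b c"
        and inc: "{a, b, c, d} \<in> all_incompatible X T t"
      have "qd (T 1) a b c d \<or> qd (T 1) a c b d \<or> qd (T 1) a d b c" using A.at_least_one[OF abcd dist] .
      then show False
      proof (elim disjE)
        assume "qd (T 1) a b c d"
        then have "is_split (restr (T 1) {a, b, c, d}) a b c d" using split_iff[OF L1 abcd dist] by simp
        then have "\<not> (R a b \<and> R c d)" using Fc[OF inc refl] by simp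
        then show False using Rs by simp
      next
        assume "qd (T 1) a c b d"
        moreover have "distinct [a, c, b, d]" using dist by auto
        ultimately have sp: "is_split (restr (T 1) {a, c, b, d}) a c b d"
          using split_iff[OF L1 abcd(1,3,2,4)] by simp
        have eq: "{a, b, c, d} = {a, c, b, d}" by auto
        have sp2: "is_split (restr (T 1) {a, b, c, d}) a c b d" using sp unfolding eq .
        have "\<not> (R a c \<and> R b d)" using Fc[OF inc eq sp2] .
        then show False using Rs by simp
      next
        assume "qd (T 1) a d b c"
        moreover have "distinct [a, d, b, c]" using dist by auto
        ultimately have sp: "is_split (restr (T 1) {a, d, b, c}) a d b c"
          using split_iff[OF L1 abcd(1,4,2,3)] by simp
        have eq: "{a, b, c, d} = {a, d, b, c}" by auto
        have sp2: "is_split (restr (T 1) {a, b, c, d}) a d b c" using sp unfolding eq .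
        have "\<not> (R a d \<and> R b c)" using Fc[OF inc eq sp2] .
        then show False using Rs by simp
      qed
    qed
    have agreeY: "\<And>Y i. Y \<in> cls ` X \<Longrightarrow> i \<in> {1..t} \<Longrightarrow>
        \<forall>a\<in>Y. \<forall>b\<in>Y. \<forall>c\<in>Y. \<forall>d\<in>Y. qd (T 1) a b c d \<longleftrightarrow> qd (T i) a b c d"
    proof (intro ballI)
      fix Y i a b c d assume Y: "Y \<in> cls ` X" and i: "i \<in> {1..t}" and abcd: "a \<in> Y" "b \<in> Y" "c \<in> Y" "d \<in> Y"
      have YX: "Y \<subseteq> X" using Y cls_sub by blast
      show "qd (T 1) a b c d \<longleftrightarrow> qd (T i) a b c d"
      proof (rule QA_of_distinct[OF L1 LT[OF i] YX YX _ abcd])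
        fix a b c d assume abcd: "a \<in> Y" "b \<in> Y" "c \<in> Y" "d \<in> Y" and dist: "distinct [a, b, c, d]"
        show "qd (T 1) a b c d \<longleftrightarrow> qd (T i) a b c d"
        proof (cases "i = 1")
          case True then show ?thesis by simp
        next
          case False
          then have i2: "i \<in> {2..t}" using i by auto
          have abcdX: "a \<in> X" "b \<in> X" "c \<in> X" "d \<in> X" using abcd YX by auto
          have Rs: "R a b" "R c d" "R a c" "R b d" "R a d" "R b c" using cls_R[OF Y] abcd by blast+
          show ?thesis
          proof (rule ccontr)
            assume nq: "\<not> (qd (T 1) a b c d \<longleftrightarrow> qd (T i) a b c d)"
            show False using mkinc[OF i2 abcdX dist nq] noinc[OF abcdX dist Rs] by simp
          qed
        qed
      qed
    qed
    have isoP: "\<forall>i\<in>{1..t}. \<forall>j\<in>{1..t}. \<forall>Y\<in>cls ` X. iso_fixing Y (restr (T i) Y) (restr (T j) Y)"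
    proof (intro ballI)
      fix i j Y assume i: "i \<in> {1..t}" and j: "j \<in> {1..t}" and Y: "Y \<in> cls ` X"
      have YX: "Y \<subseteq> X" using Y cls_sub by blast
      have "\<forall>a\<in>Y. \<forall>b\<in>Y. \<forall>c\<in>Y. \<forall>d\<in>Y. qd (T i) a b c d \<longleftrightarrow> qd (T j) a b c d"
        using agreeY[OF Y i] agreeY[OF Y j] by simp
      then show "iso_fixing Y (restr (T i) Y) (restr (T j) Y)" using iso_iff_qd[OF LT[OF i] LT[OF j] YX YX] by simp
    qed
    have disjP: "\<forall>i\<in>{1..t}. \<forall>Y\<in>cls ` X. \<forall>Z\<in>cls ` X. Y \<noteq> Z \<longrightarrow> verts (span (T i) Y) \<inter> verts (span (T i) Z) = {}"
    proof (intro ballI impI)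
      fix i Y Z assume i: "i \<in> {1..t}" and Y: "Y \<in> cls ` X" and Z: "Z \<in> cls ` X" and ne: "Y \<noteq> Z"
      interpret B: ltree "T i" X by (rule LT[OF i])
      have YX: "Y \<subseteq> X" and ZX: "Z \<subseteq> X" using Y Z cls_sub by blast+
      have YZ: "Y \<inter> Z = {}" using part Y Z ne unfolding is_partition_def by blast
      show "verts (span (T i) Y) \<inter> verts (span (T i) Z) = {}"
      proof (rule ccontr)
        assume "verts (span (T i) Y) \<inter> verts (span (T i) Z) \<noteq> {}"
        then obtain v a b c d where abcd: "a \<in> Y" "b \<in> Y" "c \<in> Z" "d \<in> Z"
          and v: "v \<in> set (B.tp a b)" "v \<in> set (B.tp c d)"
          using span_verts[OF LT[OF i] YX] span_verts[OF LT[OF i] ZX] by blast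
        have X4: "a \<in> X" "b \<in> X" "c \<in> X" "d \<in> X" using abcd YX ZX by auto
        have V4: "a \<in> verts (T i)" "b \<in> verts (T i)" "c \<in> verts (T i)" "d \<in> verts (T i)"
          using X4 B.X_verts by auto
        have ab: "a \<noteq> b"
        proof
          assume "a = b"
          then have "v = a" using v(1) B.tp_refl[OF V4(1)] by simp
          then have "a = c \<or> a = d" using B.leaf_path[OF X4(1) V4(3,4)] v(2) by simp
          then show False using YZ abcd by blast
        qed
        have cd: "c \<noteq> d"
        proof
          assume "c = d"
          then have "v = c" using v(2) B.tp_refl[OF V4(3)] by simp
          then have "c = a \<or> c = b" using B.leaf_path[OF X4(3) V4(1,2)] v(1) by simp
          then show False using YZ abcd by blast
        qed
        have dist: "distinct [a, b, c, d]" using ab cd YZ abcd by auto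
        have Rab: "R a b" and Rcd: "R c d" using cls_R Y Z abcd by blast+
        have q1: "qd (T 1) a b c d"
        proof (rule ccontr)
          assume "\<not> qd (T 1) a b c d"
          then obtain x where x: "x \<in> set (A.tp a b)" "x \<in> set (A.tp c d)" unfolding qd_def by blast
          have V1: "a \<in> verts (T 1)" "b \<in> verts (T 1)" "c \<in> verts (T 1)" "d \<in> verts (T 1)"
            using X4 Xv by auto
          have xv: "x \<in> verts (T 1)" using x A.tp_verts V1 by blast
          have "list_edges (A.tp a c) \<subseteq> list_edges (A.tp a x) \<union> list_edges (A.tp x c)"
            using A.triangle(2)[OF V1(1) xv V1(3)] .
          moreover have "list_edges (A.tp a x) \<subseteq> list_edges (A.tp a b)" using A.tp_split_sets(6)[OF V1(1,2) x(1)] .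
          moreover have "list_edges (A.tp x c) \<subseteq> list_edges (A.tp c d)"
            using A.tp_split_sets(6)[OF V1(3,4) x(2)] A.tp_edges_sym[OF V1(3) xv] by simp
          ultimately have "R a c" using Rab Rcd unfolding R_def by blast
          then show False using cls_disj[OF Y Z ne abcd(1) abcd(3)] by simp
        qed
        have nq: "\<not> qd (T i) a b c d" using v unfolding qd_def by blast
        show False
        proof (cases "i = 1")
          case True then show False using q1 nq by simp
        next
          case False
          then have i2: "i \<in> {2..t}" using i by auto
          have "\<not> (qd (T 1) a b c d \<longleftrightarrow> qd (T i) a b c d)" using q1 nq by simp
          then have inc: "{a, b, c, d} \<in> all_incompatible X T t" using mkinc[OF i2 X4 dist] by simp
          have "is_split (restr (T 1) {a, b, c, d}) a b c d" using split_iff[OF L1 X4 dist] q1 by simp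
          then have "\<not> (R a b \<and> R c d)" using Fc[OF inc refl] by simp
          then show False using Rab Rcd by simp
        qed
      qed
    qed
    show "agreement_forest X T t (forest_of X (T 1) E)"
      unfolding agreement_forest_def FE using part isoP disjP by (intro conjI)
  next
    assume AF: "agreement_forest X T t (forest_of X (T 1) E)"
    have AF': "is_partition (cls ` X) X \<and>
      (\<forall>i\<in>{1..t}. \<forall>j\<in>{1..t}. \<forall>Y\<in>cls ` X. iso_fixing Y (restr (T i) Y) (restr (T j) Y)) \<and>
      (\<forall>i\<in>{1..t}. \<forall>Y\<in>cls ` X. \<forall>Z\<in>cls ` X. Y \<noteq> Z \<longrightarrow> verts (span (T i) Y) \<inter> verts (span (T i) Z) = {})"
      using AF unfolding agreement_forest_def FE .
    note ISO = conjunct1[OF conjunct2[OF AF'], rule_format]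
    note DJ = conjunct2[OF conjunct2[OF AF'], rule_format]
    have "\<forall>Q\<in>all_incompatible X T t. \<forall>a b c d. Q = {a, b, c, d} \<and> is_split (restr (T 1) Q) a b c d \<longrightarrow> \<not> (R a b \<and> R c d)"
    proof (intro ballI allI impI notI)
      fix Q a b c d assume Q: "Q \<in> all_incompatible X T t"
        and sp: "Q = {a, b, c, d} \<and> is_split (restr (T 1) Q) a b c d" and RR: "R a b \<and> R c d"
      obtain i where i0: "i \<in> {2..t}" "Q \<in> incompatible_quartets X (T 1) (T i)"
        using Q unfolding all_incompatible_def by (elim UN_E) simp
      have i: "i \<in> {2..t}" "is_quartet X Q" "\<not> iso_fixing Q (restr (T 1) Q) (restr (T i) Q)"
        using i0 unfolding incompatible_quartets_def by auto
      have i': "i \<in> {1..t}" using i by simp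
      have Qe: "Q = {a, b, c, d}" using sp by simp
      have X4: "a \<in> X" "b \<in> X" "c \<in> X" "d \<in> X" using i(2) Qe unfolding is_quartet_def by auto
      have "card {a, b, c, d} = 4" using i(2) Qe unfolding is_quartet_def by simp
      then have dist: "distinct [a, b, c, d]" by (rule card4_distinct)
      have q1: "qd (T 1) a b c d" using sp split_iff[OF L1 X4 dist] Qe by simp
      have niso: "\<not> iso_fixing {a, b, c, d} (restr (T 1) {a, b, c, d}) (restr (T i) {a, b, c, d})"
        using i(3) Qe by simp
      have Ya: "a \<in> cls a" "b \<in> cls a" using cls_self X4 RR unfolding cls_def by auto
      have Zc: "c \<in> cls c" "d \<in> cls c" using cls_self X4 RR unfolding cls_def by auto
      have YP: "cls a \<in> cls ` X" and ZP: "cls c \<in> cls ` X" using X4 by auto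
      show False
      proof (cases "cls a = cls c")
        case True
        have YX: "cls a \<subseteq> X" using cls_sub by blast
        have "iso_fixing (cls a) (restr (T 1) (cls a)) (restr (T i) (cls a))" using ISO[OF i1 i' YP] .
        then have ag: "\<forall>x\<in>cls a. \<forall>y\<in>cls a. \<forall>z\<in>cls a. \<forall>w\<in>cls a. qd (T 1) x y z w \<longleftrightarrow> qd (T i) x y z w"
          using iso_iff_qd[OF L1 LT[OF i'] YX YX] by simp
        have sub: "{a, b, c, d} \<subseteq> cls a" using Ya Zc True by auto
        have "\<forall>x\<in>{a, b, c, d}. \<forall>y\<in>{a, b, c, d}. \<forall>z\<in>{a, b, c, d}. \<forall>w\<in>{a, b, c, d}. qd (T 1) x y z w \<longleftrightarrow> qd (T i) x y z w"
        proof (intro ballI)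
          fix x y z w assume m: "x \<in> {a, b, c, d}" "y \<in> {a, b, c, d}" "z \<in> {a, b, c, d}" "w \<in> {a, b, c, d}"
          then have "x \<in> cls a" "y \<in> cls a" "z \<in> cls a" "w \<in> cls a" using sub by (meson subsetD)+
          then show "qd (T 1) x y z w \<longleftrightarrow> qd (T i) x y z w" using ag by simp
        qed
        then show False using niso iso_Q[OF i' X4] by simp
      next
        case False
        interpret B: ltree "T i" X by (rule LT[OF i'])
        have "verts (span (T i) (cls a)) \<inter> verts (span (T i) (cls c)) = {}" using DJ[OF i' YP ZP False] .
        moreover have "set (B.tp a b) \<subseteq> verts (span (T i) (cls a))"
          using span_verts[OF LT[OF i'] cls_sub] Ya by blast
        moreover have "set (B.tp c d) \<subseteq> verts (span (T i) (cls c))"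
          using span_verts[OF LT[OF i'] cls_sub] Zc by blast
        ultimately have qi: "qd (T i) a b c d" unfolding qd_def by blast
        have "\<forall>x\<in>{a, b, c, d}. \<forall>y\<in>{a, b, c, d}. \<forall>z\<in>{a, b, c, d}. \<forall>w\<in>{a, b, c, d}. qd (T 1) x y z w \<longleftrightarrow> qd (T i) x y z w"
          by (intro ballI) (rule quartet_agree[OF L1 LT[OF i'] X4 X4 dist q1 qi])
        then show False using niso iso_Q[OF i' X4] by simp
      qed
    qed
    then show "ip_feasible X T t (\<lambda>e. if e \<in> E then 1 else 0)" by (rule iffD2[OF feas_iff])
  qed
qed

end
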